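(* Let $f_1(x)=\sum_{k\ge1}k^{-1}\sqrt2\sin(\pi kx)$ (as an element of $L^2(0,1)$). Then $f_1$ is a PDCP function, and $f_1$ does not belong to the range of $V=UP(I-S)$.
   Context: $H^2$ is the Hardy space on the open unit disk, $S$ the shift $Sf(z)=zf(z)$, $H^2_0=\{f\in H^2:f(0)=0\}$, and $P$ the orthogonal projection of $H^2$ onto $H^2_0$. $U:H^2_0\to L^2(0,1)$ is the unitary operator with $U(z^k)=\sqrt2\sin(\pi kx)$ for $k\ge1$, and $V=UP(I-S):H^2\to L^2(0,1)$. A function $\phi\in L^2(0,1)$, extended to $\mathbb{R}$ as an odd $2$-periodic function, is a PDCP function if $\mathrm{span}\{\phi(nx):n\ge1\}$ (restricted to $(0,1)$) is dense in $L^2(0,1)$. *)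

theory Defs
  imports "HOL-Complex_Analysis.Complex_Analysis"
begin

section \<open>L^2(0,1), represented by complex functions on the reals (only values on (0,1) matter)\<close>

definition L2_01 :: "(real \<Rightarrow> complex) set" where
  "L2_01 = {h. h \<in> borel_measurable (restrict_space lborel {0<..<1}) \<and>
       (\<integral>\<^sup>+ x. ennreal ((cmod (h x))\<^sup>2) * indicator {0<..<1} x \<partial>lborel) < \<infinity>}"

definition L2_dist2 :: "(real \<Rightarrow> complex) \<Rightarrow> (real \<Rightarrow> complex) \<Rightarrow> ennreal" where
  "L2_dist2 f g = (\<integral>\<^sup>+ x. ennreal ((cmod (f x - g x))\<^sup>2) * indicator {0<..<1} x \<partial>lborel)"

definition sine_partial :: "(nat \<Rightarrow> complex) \<Rightarrow> nat \<Rightarrow> real \<Rightarrow> complex" where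
  "sine_partial c n x = (\<Sum>k\<in>{1..n}. c k * complex_of_real (sqrt 2 * sin (pi * real k * x)))"

definition L2_sine_sum :: "(nat \<Rightarrow> complex) \<Rightarrow> (real \<Rightarrow> complex) \<Rightarrow> bool" where
  "L2_sine_sum c F \<longleftrightarrow> F \<in> L2_01 \<and> ((\<lambda>n. L2_dist2 (sine_partial c n) F) \<longlonglongrightarrow> 0)"

definition taylor_coeff :: "(complex \<Rightarrow> complex) \<Rightarrow> nat \<Rightarrow> complex" where
  "taylor_coeff f n = (deriv ^^ n) f 0 / of_nat (fact n)"

definition H2 :: "(complex \<Rightarrow> complex) set" where
  "H2 = {f. f holomorphic_on ball 0 1 \<and> summable (\<lambda>n. (cmod (taylor_coeff f n))\<^sup>2)}"

definition shiftS :: "(complex \<Rightarrow> complex) \<Rightarrow> (complex \<Rightarrow> complex)" where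
  "shiftS f = (\<lambda>z. z * f z)"

definition projP :: "(complex \<Rightarrow> complex) \<Rightarrow> (complex \<Rightarrow> complex)" where
  "projP f = (\<lambda>z. f z - f 0)"

text \<open>U : H^2_0 -> L^2(0,1), U(z^k) = sqrt 2 sin(pi k x), extended unitarily:
  U h = F  iff  F is the L^2 sum of sum_{k>=1} (coeff_k h) sqrt 2 sin(pi k x).\<close>
definition U_rel :: "(complex \<Rightarrow> complex) \<Rightarrow> (real \<Rightarrow> complex) \<Rightarrow> bool" where
  "U_rel h F \<longleftrightarrow> L2_sine_sum (taylor_coeff h) F"

definition in_range_V :: "(real \<Rightarrow> complex) \<Rightarrow> bool" where
  "in_range_V F \<longleftrightarrow> (\<exists>g\<in>H2. U_rel (projP (\<lambda>z. g z - shiftS g z)) F)"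

text \<open>Odd 2-periodic extension of a function given on (0,1).\<close>
definition odd_ext :: "(real \<Rightarrow> complex) \<Rightarrow> real \<Rightarrow> complex" where
  "odd_ext \<phi> x = (let y = x - 2 * of_int \<lfloor>(x + 1) / 2\<rfloor> in
                   if 0 \<le> y then \<phi> y else - \<phi> (- y))"

definition PDCP :: "(real \<Rightarrow> complex) \<Rightarrow> bool" where
  "PDCP \<phi> \<longleftrightarrow> \<phi> \<in> L2_01 \<and>
     (\<forall>h\<in>L2_01. \<forall>\<epsilon>>0. \<exists>N (c::nat \<Rightarrow> complex).
        (\<lambda>x. \<Sum>n\<in>{1..N}. c n * odd_ext \<phi> (real n * x)) \<in> L2_01 \<and>
        L2_dist2 h (\<lambda>x. \<Sum>n\<in>{1..N}. c n * odd_ext \<phi> (real n * x)) < ennreal \<epsilon>)"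

end

theory Submission
  imports Defs "HOL-Computational_Algebra.Primes"
begin


abbreviation M01 :: "real measure" where "M01 \<equiv> restrict_space lborel {0<..<1::real}"

definition N2 :: "(real \<Rightarrow> complex) \<Rightarrow> ennreal" where
  "N2 h = (\<integral>\<^sup>+ x. ennreal ((cmod (h x))\<^sup>2) * indicator {0<..<1} x \<partial>lborel)"

lemma N2_M01: "N2 h = (\<integral>\<^sup>+ x. ennreal ((cmod (h x))\<^sup>2) \<partial>M01)"
  unfolding N2_def by (subst nn_integral_restrict_space) auto

lemma L2_dist2_N2: "L2_dist2 f g = N2 (\<lambda>x. f x - g x)"
  unfolding L2_dist2_def N2_def by simp

lemma L2_01_iff: "h \<in> L2_01 \<longleftrightarrow> h \<in> borel_measurable M01 \<and> N2 h < \<infinity>"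
  unfolding L2_01_def N2_def by simp

lemma sq_add_le: "(cmod (a + b))\<^sup>2 \<le> 2 * (cmod a)\<^sup>2 + 2 * (cmod b)\<^sup>2"
proof -
  have "cmod (a+b) \<le> cmod a + cmod b" by (rule norm_triangle_ineq)
  hence "(cmod (a+b))\<^sup>2 \<le> (cmod a + cmod b)\<^sup>2" by (simp add: power_mono)
  also have "\<dots> \<le> 2 * (cmod a)\<^sup>2 + 2 * (cmod b)\<^sup>2"
    using zero_le_power2[of "cmod a - cmod b"] by (simp add: power2_diff power2_sum)
  finally show ?thesis .
qed

lemma N2_add_le:
  assumes "f \<in> borel_measurable M01" "g \<in> borel_measurable M01"
  shows "N2 (\<lambda>x. f x + g x) \<le> 2 * N2 f + 2 * N2 g"
proof -
  have "N2 (\<lambda>x. f x + g x) \<le> (\<integral>\<^sup>+ x. 2 * ennreal ((cmod (f x))\<^sup>2) + 2 * ennreal ((cmod (g x))\<^sup>2) \<partial>M01)"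
    unfolding N2_M01
  proof (rule nn_integral_mono)
    fix x
    have "ennreal ((cmod (f x + g x))\<^sup>2) \<le> ennreal (2 * (cmod (f x))\<^sup>2 + 2 * (cmod (g x))\<^sup>2)"
      by (rule ennreal_leI) (rule sq_add_le)
    also have "\<dots> = 2 * ennreal ((cmod (f x))\<^sup>2) + 2 * ennreal ((cmod (g x))\<^sup>2)"
      by (simp add: ennreal_plus ennreal_mult)
    finally show "ennreal ((cmod (f x + g x))\<^sup>2) \<le> 2 * ennreal ((cmod (f x))\<^sup>2) + 2 * ennreal ((cmod (g x))\<^sup>2)" .
  qed
  also have "\<dots> = 2 * N2 f + 2 * N2 g"
    unfolding N2_M01 using assms
    by (subst nn_integral_add) (auto simp: nn_integral_cmult)
  finally show ?thesis .
qed

lemma N2_cmult: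
  assumes "f \<in> borel_measurable M01"
  shows "N2 (\<lambda>x. c * f x) = ennreal ((cmod c)\<^sup>2) * N2 f"
  unfolding N2_M01 using assms
  by (subst nn_integral_cmult[symmetric]) (auto simp: norm_mult power_mult_distrib ennreal_mult)

lemma N2_minus: "N2 (\<lambda>x. - f x) = N2 f"
  unfolding N2_def by simp

lemma dist_tri:
  assumes "f \<in> borel_measurable M01" "g \<in> borel_measurable M01" "h \<in> borel_measurable M01"
  shows "L2_dist2 f h \<le> 2 * L2_dist2 f g + 2 * L2_dist2 g h"
proof -
  have "L2_dist2 f h = N2 (\<lambda>x. (f x - g x) + (g x - h x))" unfolding L2_dist2_N2 by simp
  also have "\<dots> \<le> 2 * N2 (\<lambda>x. f x - g x) + 2 * N2 (\<lambda>x. g x - h x)"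
    by (rule N2_add_le) (use assms in auto)
  finally show ?thesis unfolding L2_dist2_N2 .
qed

lemma L2_01_lin:
  assumes "f \<in> L2_01" "g \<in> L2_01"
  shows "(\<lambda>x. f x + c * g x) \<in> L2_01"
proof -
  have m: "f \<in> borel_measurable M01" "g \<in> borel_measurable M01" and fin: "N2 f < \<infinity>" "N2 g < \<infinity>"
    using assms by (auto simp: L2_01_iff)
  have "N2 (\<lambda>x. f x + c * g x) \<le> 2 * N2 f + 2 * N2 (\<lambda>x. c * g x)"
    by (rule N2_add_le) (use m in auto)
  also have "\<dots> = 2 * N2 f + 2 * (ennreal ((cmod c)\<^sup>2) * N2 g)" using m by (simp add: N2_cmult)
  also have "\<dots> < \<infinity>" using fin by (simp add: ennreal_mult_less_top ennreal_mult_eq_top_iff)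
  finally show ?thesis using m by (auto simp: L2_01_iff)
qed


lemma ftc_real:
  fixes f f' :: "real \<Rightarrow> real"
  assumes "a \<le> b" "\<And>x. (f has_real_derivative f' x) (at x)"
  shows "(f' has_integral (f b - f a)) {a..b}"
  by (rule fundamental_theorem_of_calculus[OF assms(1)])
     (auto simp: has_real_derivative_iff_has_vector_derivative[symmetric] intro: has_field_derivative_at_within assms(2))

lemma cos_int_integral:
  fixes m :: int
  shows "((\<lambda>x. cos (pi * m * x)) has_integral (if m = 0 then 1 else 0)) {0..1}"
proof (cases "m = 0")
  case True
  then show ?thesis using has_integral_const_real[of 1 0 1] by simp
next
  case False
  have d: "\<And>x. ((\<lambda>x. sin (pi * m * x) / (pi * m)) has_real_derivative cos (pi * m * x)) (at x)"
    using False by (auto intro!: derivative_eq_intros simp: field_simps)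
  have "((\<lambda>x. cos (pi * m * x)) has_integral (sin (pi * m * 1) / (pi * m) - sin (pi * m * 0) / (pi * m))) {0..1}"
    by (rule ftc_real[OF _ d]) simp
  moreover have "sin (pi * m) = 0"
    using sin_zero_iff_int2[of "pi * m"] by (auto simp: mult.commute)
  ultimately show ?thesis using False by simp
qed

lemma sin_orth:
  fixes j k :: nat
  shows "((\<lambda>x. (sqrt 2 * sin (pi * j * x)) * (sqrt 2 * sin (pi * k * x))) has_integral
          (if j = k \<and> j \<noteq> 0 then 1 else 0)) {0..1}"
proof -
  have eq: "(sqrt 2 * sin (pi * j * x)) * (sqrt 2 * sin (pi * k * x)) =
        cos (pi * (int j - int k) * x) - cos (pi * (int j + int k) * x)" for x
  proof -
    have "(sqrt 2 * sin (pi * j * x)) * (sqrt 2 * sin (pi * k * x)) = 2 * (sin (pi * j * x) * sin (pi * k * x))"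
      by simp
    also have "\<dots> = cos (pi * j * x - pi * k * x) - cos (pi * j * x + pi * k * x)"
      by (simp add: cos_diff cos_add)
    finally show ?thesis by (simp add: algebra_simps)
  qed
  have "((\<lambda>x. cos (pi * (int j - int k) * x) - cos (pi * (int j + int k) * x)) has_integral
          ((if int j - int k = 0 then 1 else 0) - (if int j + int k = 0 then 1 else 0))) {0..1}"
    using has_integral_diff[OF cos_int_integral[of "int j - int k"] cos_int_integral[of "int j + int k"]]
    by simp
  then show ?thesis unfolding eq by (auto split: if_splits)
qed

lemma real_pyth:
  fixes a :: "nat \<Rightarrow> real"
  assumes "finite A" "0 \<notin> A"
  shows "((\<lambda>x. (\<Sum>k\<in>A. a k * (sqrt 2 * sin (pi * k * x)))\<^sup>2) has_integral (\<Sum>k\<in>A. (a k)\<^sup>2)) {0..1}"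
proof -
  have eq: "(\<Sum>k\<in>A. a k * (sqrt 2 * sin (pi * k * x)))\<^sup>2 =
     (\<Sum>j\<in>A. \<Sum>k\<in>A. (a j * a k) * ((sqrt 2 * sin (pi * j * x)) * (sqrt 2 * sin (pi * k * x))))" for x
    by (simp add: power2_eq_square sum_product algebra_simps)
  have "((\<lambda>x. \<Sum>j\<in>A. \<Sum>k\<in>A. (a j * a k) * ((sqrt 2 * sin (pi * j * x)) * (sqrt 2 * sin (pi * k * x))))
        has_integral (\<Sum>j\<in>A. \<Sum>k\<in>A. (a j * a k) * (if j = k \<and> j \<noteq> 0 then 1 else 0))) {0..1}"
    by (intro has_integral_sum assms has_integral_mult_right sin_orth)
  also have "(\<Sum>j\<in>A. \<Sum>k\<in>A. (a j * a k) * (if j = k \<and> j \<noteq> 0 then 1 else 0)) = (\<Sum>j\<in>A. (a j)\<^sup>2)"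
  proof (rule sum.cong[OF refl])
    fix j assume j: "j \<in> A"
    have "(\<Sum>k\<in>A. (a j * a k) * (if j = k \<and> j \<noteq> 0 then 1 else 0)) = (\<Sum>k\<in>A. if k = j then (a j)\<^sup>2 else 0)"
      using j assms(2) by (intro sum.cong) (auto simp: power2_eq_square)
    also have "\<dots> = (a j)\<^sup>2" using j assms(1) by simp
    finally show "(\<Sum>k\<in>A. (a j * a k) * (if j = k \<and> j \<noteq> 0 then 1 else 0)) = (a j)\<^sup>2" .
  qed
  finally show ?thesis unfolding eq .
qed

definition sfun :: "(nat \<Rightarrow> complex) \<Rightarrow> nat set \<Rightarrow> real \<Rightarrow> complex" where
  "sfun c A x = (\<Sum>k\<in>A. c k * complex_of_real (sqrt 2 * sin (pi * real k * x)))"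

lemma sine_partial_sfun: "sine_partial c n = sfun c {1..n}"
  unfolding sine_partial_def sfun_def by (rule ext) simp

lemma continuous_sfun: "continuous_on S (sfun c A)"
  unfolding sfun_def by (intro continuous_intros)

lemma sfun_measurable: "sfun c A \<in> borel_measurable M01"
proof -
  have "sfun c A \<in> borel_measurable borel" by (rule borel_measurable_continuous_onI[OF continuous_sfun])
  then show ?thesis by (intro measurable_restrict_space1) simp
qed

lemma cmod_sfun_sq:
  "(cmod (sfun c A x))\<^sup>2 = (\<Sum>k\<in>A. Re (c k) * (sqrt 2 * sin (pi * k * x)))\<^sup>2 + (\<Sum>k\<in>A. Im (c k) * (sqrt 2 * sin (pi * k * x)))\<^sup>2"
proof -
  have "Re (sfun c A x) = (\<Sum>k\<in>A. Re (c k) * (sqrt 2 * sin (pi * k * x)))"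
       "Im (sfun c A x) = (\<Sum>k\<in>A. Im (c k) * (sqrt 2 * sin (pi * k * x)))"
    unfolding sfun_def by (simp_all add: Re_sum Im_sum)
  then show ?thesis by (simp add: cmod_power2)
qed

lemma sfun_has_integral:
  assumes "finite A" "0 \<notin> A"
  shows "((\<lambda>x. (cmod (sfun c A x))\<^sup>2) has_integral (\<Sum>k\<in>A. (cmod (c k))\<^sup>2)) {0..1}"
proof -
  have "((\<lambda>x. (cmod (sfun c A x))\<^sup>2) has_integral
         ((\<Sum>k\<in>A. (Re (c k))\<^sup>2) + (\<Sum>k\<in>A. (Im (c k))\<^sup>2))) {0..1}"
    unfolding cmod_sfun_sq by (intro has_integral_add real_pyth assms)
  then show ?thesis by (simp add: cmod_power2 sum.distrib)
qed

lemma N2_has_integral: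
  fixes f :: "real \<Rightarrow> real"
  assumes "\<And>x. 0 \<le> f x" "(f has_integral I) {0..1}"
  shows "(\<integral>\<^sup>+ x. ennreal (f x) * indicator {0<..<1} x \<partial>lborel) = ennreal I"
proof -
  have "(f has_integral I) {0<..<1}"
    using assms(2) has_integral_open_interval[of f I "0::real" "1::real"] by (simp only: box_real)
  from nn_integral_has_integral_lebesgue[OF _ this] assms(1)
  have "(\<integral>\<^sup>+ x. ennreal (f x * indicator {0<..<1} x) \<partial>lborel) = ennreal I" by (simp add: mult.commute)
  moreover have "(\<integral>\<^sup>+x. ennreal (f x) * indicator {0<..<1} x \<partial>lborel) = (\<integral>\<^sup>+x. ennreal (f x * indicator {0<..<1} x) \<partial>lborel)"
    by (intro nn_integral_cong) (auto split: split_indicator)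
  ultimately show ?thesis by simp
qed

lemma N2_sfun:
  assumes "finite A" "0 \<notin> A"
  shows "N2 (sfun c A) = ennreal (\<Sum>k\<in>A. (cmod (c k))\<^sup>2)"
  unfolding N2_def by (rule N2_has_integral[OF _ sfun_has_integral[OF assms]]) simp

lemma sfun_diff: "sfun c A x - sfun d A x = sfun (\<lambda>k. c k - d k) A x"
  unfolding sfun_def by (simp add: sum_subtractf algebra_simps)


lemma L2_sine_sumD:
  assumes "L2_sine_sum b F"
  shows "F \<in> L2_01" "F \<in> borel_measurable M01" "N2 F < \<infinity>"
        "(\<lambda>n. L2_dist2 (sine_partial b n) F) \<longlonglongrightarrow> 0"
  using assms by (auto simp: L2_sine_sum_def L2_01_iff)

lemma sine_partial_measurable: "sine_partial b n \<in> borel_measurable M01"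
  unfolding sine_partial_sfun by (rule sfun_measurable)

lemma N2_sine_partial: "N2 (sine_partial b n) = ennreal (\<Sum>t\<in>{1..n}. (cmod (b t))\<^sup>2)"
  unfolding sine_partial_sfun by (rule N2_sfun) auto

lemma ennreal_lim_zero_bound:
  fixes x :: ennreal and d :: "nat \<Rightarrow> ennreal"
  assumes "d \<longlonglongrightarrow> 0" "\<And>n. x \<le> a + 2 * d n"
  shows "x \<le> a"
proof -
  have "(\<lambda>n. a + 2 * d n) \<longlonglongrightarrow> a + 2 * 0"
    by (intro tendsto_add tendsto_const ennreal_tendsto_cmult assms(1)) simp
  then have "(\<lambda>n. a + 2 * d n) \<longlonglongrightarrow> a" by simp
  then show ?thesis
    by (rule tendsto_le[OF sequentially_bot _ tendsto_const]) (use assms(2) in auto)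
qed

lemma L2_sine_sum_bound:
  assumes F: "L2_sine_sum b F" and C: "\<And>n. (\<Sum>t\<in>{1..n}. (cmod (b t))\<^sup>2) \<le> C"
  shows "N2 F \<le> 2 * ennreal C"
proof (rule ennreal_lim_zero_bound[OF L2_sine_sumD(4)[OF F]])
  fix n
  have m: "F \<in> borel_measurable M01" using L2_sine_sumD[OF F] by simp
  have "N2 F = N2 (\<lambda>x. sine_partial b n x + (F x - sine_partial b n x))" by simp
  also have "\<dots> \<le> 2 * N2 (sine_partial b n) + 2 * N2 (\<lambda>x. F x - sine_partial b n x)"
    by (rule N2_add_le) (use m sine_partial_measurable in auto)
  also have "N2 (\<lambda>x. F x - sine_partial b n x) = L2_dist2 (sine_partial b n) F"
    unfolding L2_dist2_N2 using N2_minus[of "\<lambda>x. sine_partial b n x - F x"] by simp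
  also have "2 * N2 (sine_partial b n) \<le> 2 * ennreal C"
    unfolding N2_sine_partial by (intro mult_left_mono ennreal_leI C) simp
  finally show "N2 F \<le> 2 * ennreal C + 2 * L2_dist2 (sine_partial b n) F" by (simp add: add_right_mono)
qed

lemma sine_partial_lin:
  "sine_partial (\<lambda>t. b t + c * b' t) n x = sine_partial b n x + c * sine_partial b' n x"
  unfolding sine_partial_def by (simp add: sum.distrib sum_distrib_left algebra_simps)

lemma L2_sine_sum_lin:
  assumes F: "L2_sine_sum b F" and G: "L2_sine_sum b' G"
  shows "L2_sine_sum (\<lambda>t. b t + c * b' t) (\<lambda>x. F x + c * G x)"
proof -
  note FF = L2_sine_sumD[OF F] and GG = L2_sine_sumD[OF G]
  have mem: "(\<lambda>x. F x + c * G x) \<in> L2_01" by (rule L2_01_lin) (use FF GG in auto)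
  have le: "L2_dist2 (sine_partial (\<lambda>t. b t + c * b' t) n) (\<lambda>x. F x + c * G x) \<le>
      2 * L2_dist2 (sine_partial b n) F + 2 * (ennreal ((cmod c)\<^sup>2) * L2_dist2 (sine_partial b' n) G)" for n
  proof -
    have "L2_dist2 (sine_partial (\<lambda>t. b t + c * b' t) n) (\<lambda>x. F x + c * G x) =
        N2 (\<lambda>x. (sine_partial b n x - F x) + c * (sine_partial b' n x - G x))"
      unfolding L2_dist2_N2 sine_partial_lin by (simp add: algebra_simps)
    also have "\<dots> \<le> 2 * N2 (\<lambda>x. sine_partial b n x - F x) + 2 * N2 (\<lambda>x. c * (sine_partial b' n x - G x))"
      by (rule N2_add_le) (use FF GG sine_partial_measurable in auto)
    also have "N2 (\<lambda>x. c * (sine_partial b' n x - G x)) = ennreal ((cmod c)\<^sup>2) * N2 (\<lambda>x. sine_partial b' n x - G x)"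
      by (rule N2_cmult) (use FF GG sine_partial_measurable in auto)
    finally show ?thesis unfolding L2_dist2_N2 .
  qed
  have "(\<lambda>n. 2 * L2_dist2 (sine_partial b n) F + 2 * (ennreal ((cmod c)\<^sup>2) * L2_dist2 (sine_partial b' n) G))
        \<longlonglongrightarrow> 2 * 0 + 2 * (ennreal ((cmod c)\<^sup>2) * 0)"
    by (intro tendsto_add ennreal_tendsto_cmult FF(4) GG(4)) auto
  then have "(\<lambda>n. 2 * L2_dist2 (sine_partial b n) F + 2 * (ennreal ((cmod c)\<^sup>2) * L2_dist2 (sine_partial b' n) G))
        \<longlonglongrightarrow> 0" by simp
  then have "(\<lambda>n. L2_dist2 (sine_partial (\<lambda>t. b t + c * b' t) n) (\<lambda>x. F x + c * G x)) \<longlonglongrightarrow> 0"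
    by (rule tendsto_sandwich[rotated 2, OF tendsto_const]) (use le in auto)
  then show ?thesis using mem unfolding L2_sine_sum_def by simp
qed

lemma N2_zero_fun: "N2 (\<lambda>x. 0) = 0" unfolding N2_def by simp

lemma L2_sine_sum_finite:
  assumes "\<And>t. t \<notin> {1..K} \<Longrightarrow> b t = 0"
  shows "L2_sine_sum b (sfun b {1..K})"
proof -
  have mem: "sfun b {1..K} \<in> L2_01"
    unfolding L2_01_iff using N2_sfun[of "{1..K}" b] sfun_measurable by simp
  have ev: "\<forall>\<^sub>F n in sequentially. L2_dist2 (sine_partial b n) (sfun b {1..K}) = 0"
  proof (rule eventually_sequentiallyI[of K])
    fix n assume n: "K \<le> n"
    have "sine_partial b n = sfun b {1..K}"
      unfolding sine_partial_sfun sfun_def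
    proof (rule ext, rule sum.mono_neutral_right)
      show "{1..K} \<subseteq> {1..n}" using n by auto
    qed (use assms in auto)
    then show "L2_dist2 (sine_partial b n) (sfun b {1..K}) = 0" unfolding L2_dist2_N2 by (simp add: N2_zero_fun)
  qed
  have "(\<lambda>n. L2_dist2 (sine_partial b n) (sfun b {1..K})) \<longlonglongrightarrow> 0"
    by (rule tendsto_eventually) (rule ev)
  then show ?thesis using mem unfolding L2_sine_sum_def by simp
qed

lemma L2_sine_sum_zero_coeff:
  assumes F: "L2_sine_sum d (\<lambda>x. 0)" and k: "1 \<le> k"
  shows "d k = 0"
proof -
  have lim: "(\<lambda>n. ennreal (\<Sum>t\<in>{1..n}. (cmod (d t))\<^sup>2)) \<longlonglongrightarrow> 0"
    using L2_sine_sumD(4)[OF F] unfolding L2_dist2_N2 by (simp add: N2_sine_partial)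
  have "ennreal ((cmod (d k))\<^sup>2) \<le> 0"
  proof (rule tendsto_le[OF sequentially_bot lim tendsto_const])
    show "\<forall>\<^sub>F n in sequentially. ennreal ((cmod (d k))\<^sup>2) \<le> ennreal (\<Sum>t\<in>{1..n}. (cmod (d t))\<^sup>2)"
    proof (rule eventually_sequentiallyI[of k])
      fix n assume "k \<le> n"
      then have "(cmod (d k))\<^sup>2 \<le> (\<Sum>t\<in>{1..n}. (cmod (d t))\<^sup>2)"
        using k by (intro member_le_sum) auto
      then show "ennreal ((cmod (d k))\<^sup>2) \<le> ennreal (\<Sum>t\<in>{1..n}. (cmod (d t))\<^sup>2)" by (rule ennreal_leI)
    qed
  qed
  then show ?thesis by simp
qed

lemma L2_sine_sum_unique:
  assumes "L2_sine_sum b F" "L2_sine_sum b' F" "1 \<le> k"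
  shows "b k = b' k"
proof -
  have "L2_sine_sum (\<lambda>t. b t + (-1) * b' t) (\<lambda>x. F x + (-1) * F x)"
    by (rule L2_sine_sum_lin[OF assms(1,2)])
  then have "L2_sine_sum (\<lambda>t. b t + (-1) * b' t) (\<lambda>x. 0)" by simp
  from L2_sine_sum_zero_coeff[OF this assms(3)] show ?thesis by simp
qed


definition F0 :: "real \<Rightarrow> complex" where
  "F0 x = complex_of_real (pi / sqrt 2 * (1 - x))"

lemma int_sin_F0:
  assumes "1 \<le> k"
  shows "((\<lambda>x. (sqrt 2 * sin (pi * real k * x)) * (pi / sqrt 2 * (1 - x))) has_integral (1 / real k)) {0..1}"
proof -
  define G where "G x = pi * (- (1 - x) * cos (pi * k * x) / (pi * k) - sin (pi * k * x) / (pi * k)\<^sup>2)" for x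
  have kp: "real k > 0" using assms by simp
  have d: "(G has_real_derivative (sqrt 2 * sin (pi * real k * x)) * (pi / sqrt 2 * (1 - x))) (at x)" for x
  proof -
    have "(G has_real_derivative pi * (cos (pi * k * x) / (pi * k) + (1 - x) * sin (pi * k * x) - cos (pi * k * x) / (pi * k))) (at x)"
      unfolding G_def using kp
      by (auto intro!: derivative_eq_intros simp: field_simps power2_eq_square)
    then show ?thesis by (rule DERIV_cong) (simp add: field_simps)
  qed
  have "G 1 - G 0 = 1 / real k"
  proof -
    have "sin (pi * k) = 0" by (simp add: mult.commute)
    then show ?thesis unfolding G_def using kp by (simp add: field_simps)
  qed
  with ftc_real[OF _ d, of 0 1] show ?thesis by simp
qed

lemma int_F0_sq: "((\<lambda>x. (pi / sqrt 2 * (1 - x))\<^sup>2) has_integral (pi\<^sup>2 / 6)) {0..1}"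
proof -
  define G where "G x = - (pi\<^sup>2 / 2) * (1 - x) ^ 3 / 3" for x :: real
  have d: "(G has_real_derivative (pi / sqrt 2 * (1 - x))\<^sup>2) (at x)" for x
  proof -
    have "(G has_real_derivative (pi\<^sup>2 / 2) * (1 - x)\<^sup>2) (at x)"
      unfolding G_def by (auto intro!: derivative_eq_intros simp: field_simps power2_eq_square)
    moreover have "(pi\<^sup>2 / 2) * (1 - x)\<^sup>2 = (pi / sqrt 2 * (1 - x))\<^sup>2"
      by (simp add: power_mult_distrib power_divide)
    ultimately show ?thesis by simp
  qed
  have "G 1 - G 0 = pi\<^sup>2 / 6" unfolding G_def by simp
  with ftc_real[OF _ d, of 0 1] show ?thesis by simp
qed

definition acoef :: "nat \<Rightarrow> complex" where "acoef k = 1 / of_nat k"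

lemma sine_partial_acoef:
  "sine_partial acoef n x = complex_of_real (\<Sum>k\<in>{1..n}. (1 / real k) * (sqrt 2 * sin (pi * real k * x)))"
  unfolding sine_partial_def acoef_def by simp

lemma dist_F0_integral:
  "((\<lambda>x. (cmod (sine_partial acoef n x - F0 x))\<^sup>2) has_integral
     (pi\<^sup>2 / 6 - (\<Sum>k\<in>{1..n}. (1 / real k)\<^sup>2))) {0..1}"
proof -
  define S where "S x = (\<Sum>k\<in>{1..n}. (1 / real k) * (sqrt 2 * sin (pi * real k * x)))" for x
  define F where "F x = pi / sqrt 2 * (1 - x)" for x :: real
  have eq: "(cmod (sine_partial acoef n x - F0 x))\<^sup>2 =
      (S x)\<^sup>2 - 2 * (\<Sum>k\<in>{1..n}. (1 / real k) * ((sqrt 2 * sin (pi * real k * x)) * F x)) + (F x)\<^sup>2" for x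
  proof -
    have "sine_partial acoef n x - F0 x = complex_of_real (S x - F x)"
      unfolding sine_partial_acoef S_def F_def F0_def by simp
    then have "(cmod (sine_partial acoef n x - F0 x))\<^sup>2 = (S x - F x)\<^sup>2" by (simp only: norm_of_real power2_abs)
    also have "\<dots> = (S x)\<^sup>2 - 2 * (S x * F x) + (F x)\<^sup>2" by (simp add: power2_diff)
    also have "S x * F x = (\<Sum>k\<in>{1..n}. (1 / real k) * ((sqrt 2 * sin (pi * real k * x)) * F x))"
      unfolding S_def by (simp add: sum_distrib_right mult.assoc)
    finally show ?thesis .
  qed
  have h1: "((\<lambda>x. (S x)\<^sup>2) has_integral (\<Sum>k\<in>{1..n}. (1 / real k)\<^sup>2)) {0..1}"
    unfolding S_def by (rule real_pyth) auto
  have h2: "((\<lambda>x. (\<Sum>k\<in>{1..n}. (1 / real k) * ((sqrt 2 * sin (pi * real k * x)) * F x))) has_integral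
        (\<Sum>k\<in>{1..n}. (1 / real k) * (1 / real k))) {0..1}"
    unfolding F_def by (intro has_integral_sum has_integral_mult_right int_sin_F0) auto
  have h3: "((\<lambda>x. (F x)\<^sup>2) has_integral pi\<^sup>2 / 6) {0..1}" unfolding F_def by (rule int_F0_sq)
  have "((\<lambda>x. (S x)\<^sup>2 - 2 * (\<Sum>k\<in>{1..n}. (1 / real k) * ((sqrt 2 * sin (pi * real k * x)) * F x)) + (F x)\<^sup>2)
     has_integral ((\<Sum>k\<in>{1..n}. (1 / real k)\<^sup>2) - 2 * (\<Sum>k\<in>{1..n}. (1 / real k) * (1 / real k)) + pi\<^sup>2 / 6)) {0..1}"
    by (intro has_integral_add has_integral_diff has_integral_mult_right h1 h2 h3)
  moreover have "(\<Sum>k\<in>{1..n}. (1 / real k)\<^sup>2) - 2 * (\<Sum>k\<in>{1..n}. (1 / real k) * (1 / real k)) + pi\<^sup>2 / 6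
      = pi\<^sup>2 / 6 - (\<Sum>k\<in>{1..n}. (1 / real k)\<^sup>2)"
    by (simp add: power2_eq_square)
  ultimately show ?thesis unfolding eq by simp
qed

lemma sum_shift1: "(\<Sum>k\<in>{1..n}. f k) = (\<Sum>i<n. f (Suc i))"
  by (induction n) (auto simp: atLeastAtMostSuc_conv add.commute)

lemma F0_L2: "F0 \<in> L2_01"
proof -
  have c: "continuous_on UNIV F0" unfolding F0_def by (intro continuous_intros)
  have m: "F0 \<in> borel_measurable M01"
    by (intro measurable_restrict_space1) (simp add: borel_measurable_continuous_onI[OF c])
  have "N2 F0 = ennreal (pi\<^sup>2 / 6)"
    unfolding N2_def
  proof (rule N2_has_integral)
    show "((\<lambda>x. (cmod (F0 x))\<^sup>2) has_integral pi\<^sup>2 / 6) {0..1}"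
      unfolding F0_def by (simp only: norm_of_real power2_abs int_F0_sq)
  qed simp
  then show ?thesis using m by (simp add: L2_01_iff)
qed

lemma F0_sine_sum: "L2_sine_sum acoef F0"
proof -
  have eq: "L2_dist2 (sine_partial acoef n) F0 = ennreal (pi\<^sup>2 / 6 - (\<Sum>k\<in>{1..n}. (1 / real k)\<^sup>2))" for n
    unfolding L2_dist2_def
    by (rule N2_has_integral[OF _ dist_F0_integral]) simp
  have "(\<lambda>n. \<Sum>i<n. 1 / (1 + real i)\<^sup>2) \<longlonglongrightarrow> pi\<^sup>2 / 6"
    using inverse_squares_sums unfolding sums_def by simp
  then have "(\<lambda>n. \<Sum>k\<in>{1..n}. (1 / real k)\<^sup>2) \<longlonglongrightarrow> pi\<^sup>2 / 6"
    unfolding sum_shift1 by (simp add: power_one_over add.commute)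
  then have "(\<lambda>n. pi\<^sup>2 / 6 - (\<Sum>k\<in>{1..n}. (1 / real k)\<^sup>2)) \<longlonglongrightarrow> pi\<^sup>2 / 6 - pi\<^sup>2 / 6"
    by (intro tendsto_diff tendsto_const)
  then have "(\<lambda>n. ennreal (pi\<^sup>2 / 6 - (\<Sum>k\<in>{1..n}. (1 / real k)\<^sup>2))) \<longlonglongrightarrow> ennreal 0"
    by (intro tendsto_ennrealI) simp
  then show ?thesis unfolding L2_sine_sum_def eq using F0_L2 by simp
qed


lemma higher_deriv_z_mult:
  assumes "g holomorphic_on ball 0 1" "1 \<le> n"
  shows "(deriv ^^ n) (\<lambda>w. w * g w) 0 = of_nat n * (deriv ^^ (n - 1)) g 0"
proof -
  have "(deriv ^^ n) (\<lambda>w. w * g w) 0 =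
      (\<Sum>i = 0..n. of_nat (n choose i) * (deriv ^^ i) (\<lambda>w. w) 0 * (deriv ^^ (n-i)) g 0)"
    by (rule higher_deriv_mult) (use assms in \<open>auto intro: holomorphic_intros\<close>)
  also have "\<dots> = (\<Sum>i = 0..n. if i = 1 then of_nat n * (deriv ^^ (n - 1)) g 0 else 0)"
    by (intro sum.cong) auto
  also have "\<dots> = of_nat n * (deriv ^^ (n - 1)) g 0" using assms(2) by simp
  finally show ?thesis .
qed

lemma taylor_h:
  assumes g: "g holomorphic_on ball 0 1" and n: "1 \<le> n"
  shows "taylor_coeff (projP (\<lambda>z. g z - shiftS g z)) n = taylor_coeff g n - taylor_coeff g (n - 1)"
proof -
  have hol1: "(\<lambda>z. z * g z) holomorphic_on ball 0 1" using g by (auto intro: holomorphic_intros)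
  have hol2: "(\<lambda>z. g z - z * g z) holomorphic_on ball 0 1" using g hol1 by (auto intro: holomorphic_intros)
  have "projP (\<lambda>z. g z - shiftS g z) = (\<lambda>z. (g z - z * g z) - g 0)"
    unfolding projP_def shiftS_def by simp
  then have "(deriv ^^ n) (projP (\<lambda>z. g z - shiftS g z)) 0 =
        (deriv ^^ n) (\<lambda>z. g z - z * g z) 0 - (deriv ^^ n) (\<lambda>z. g 0) 0"
    using higher_deriv_diff[OF hol2 holomorphic_on_const[of "g 0"], of 0 n] by simp
  also have "\<dots> = (deriv ^^ n) g 0 - (deriv ^^ n) (\<lambda>z. z * g z) 0"
    using higher_deriv_diff[OF g hol1, of 0 n] n by simp
  also have "\<dots> = (deriv ^^ n) g 0 - of_nat n * (deriv ^^ (n - 1)) g 0"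
    using higher_deriv_z_mult[OF g n] by simp
  finally have eq: "(deriv ^^ n) (projP (\<lambda>z. g z - shiftS g z)) 0 = (deriv ^^ n) g 0 - of_nat n * (deriv ^^ (n - 1)) g 0" .
  have fn: "fact n = (of_nat n * fact (n - 1) :: complex)" using n by (cases n) (simp_all add: fact_Suc)
  have nz: "(fact (n - 1) :: complex) \<noteq> 0" "(of_nat n :: complex) \<noteq> 0" using n by auto
  show ?thesis
    unfolding taylor_coeff_def eq using nz fn by (simp add: field_simps)
qed

lemma not_in_range_V:
  assumes f1: "L2_sine_sum acoef f1"
  shows "\<not> in_range_V f1"
proof
  assume "in_range_V f1"
  then obtain g where gH: "g \<in> H2" and U: "L2_sine_sum (taylor_coeff (projP (\<lambda>z. g z - shiftS g z))) f1"
    unfolding in_range_V_def U_rel_def by blast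
  have hol: "g holomorphic_on ball 0 1" and sm: "summable (\<lambda>n. (cmod (taylor_coeff g n))\<^sup>2)"
    using gH unfolding H2_def by auto
  define a where "a = taylor_coeff g"
  have step: "a k - a (k - 1) = 1 / of_nat k" if "1 \<le> k" for k
    using L2_sine_sum_unique[OF U f1 that] taylor_h[OF hol that] unfolding a_def acoef_def by simp
  have aform: "a n = a 0 + of_real (\<Sum>k\<in>{1..n}. 1 / real k)" for n
  proof (induction n)
    case (Suc n)
    have "a (Suc n) = a n + 1 / of_nat (Suc n)" using step[of "Suc n"] by (simp add: algebra_simps)
    then show ?case using Suc by (simp add: atLeastAtMostSuc_conv)
  qed simp
  have "(\<lambda>n. (cmod (a n))\<^sup>2) \<longlonglongrightarrow> 0" using summable_LIMSEQ_zero[OF sm] unfolding a_def .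
  then have "(\<lambda>n. sqrt ((cmod (a n))\<^sup>2)) \<longlonglongrightarrow> sqrt 0" by (intro tendsto_real_sqrt)
  then have "(\<lambda>n. cmod (a n)) \<longlonglongrightarrow> 0" by simp
  then have "a \<longlonglongrightarrow> 0" by (simp add: tendsto_norm_zero_iff)
  then have "(\<lambda>n. Re (a n)) \<longlonglongrightarrow> Re 0" by (intro tendsto_Re)
  then have "(\<lambda>n. Re (a n) - Re (a 0)) \<longlonglongrightarrow> 0 - Re (a 0)" by (intro tendsto_diff tendsto_const) simp
  moreover have "Re (a n) - Re (a 0) = sum (\<lambda>i. inverse (real i)) {..n}" for n
  proof -
    have "sum (\<lambda>i. inverse (real i)) {..n} = sum (\<lambda>i. inverse (real i)) {1..n}"
      by (rule sum.mono_neutral_right) auto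
    have "Re (a n) = Re (a 0 + of_real (\<Sum>k\<in>{1..n}. 1 / real k))" using aform[of n] by metis
    also have "\<dots> = Re (a 0) + (\<Sum>k\<in>{1..n}. 1 / real k)" by (simp only: plus_complex.sel Re_complex_of_real)
    finally show ?thesis using \<open>sum (\<lambda>i. inverse (real i)) {..n} = sum (\<lambda>i. inverse (real i)) {1..n}\<close>
      by (simp add: divide_inverse)
  qed
  ultimately have "convergent (\<lambda>n. sum (\<lambda>i. inverse (real i)) {..n})"
    unfolding convergent_def by auto
  then have "summable (\<lambda>i. inverse (real i))" by (simp add: summable_iff_convergent')
  then show False using not_summable_harmonic by blast
qed


lemma sin_minus_2pi_int: "sin (t - 2 * pi * of_int j) = sin t"
  by (simp only: sin_diff sin_int_2pin cos_int_2pin) simp?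

lemma sfun_shift: "sfun c A (x - 2 * of_int m) = sfun c A x"
proof -
  have "sin (pi * real k * (x - 2 * of_int m)) = sin (pi * real k * x)" for k
  proof -
    have "pi * real k * (x - 2 * of_int m) = pi * real k * x - 2 * pi * of_int (int k * m)"
      by (simp add: algebra_simps)
    moreover have "sin (pi * real k * x - 2 * pi * of_int (int k * m)) = sin (pi * real k * x)"
      by (rule sin_minus_2pi_int)
    ultimately show ?thesis by metis
  qed
  then show ?thesis unfolding sfun_def by simp
qed

lemma sfun_odd: "sfun c A (- x) = - sfun c A x"
  unfolding sfun_def by (simp add: sum_negf)

lemma odd_ext_sfun: "odd_ext (sfun c A) x = sfun c A x"
  unfolding odd_ext_def Let_def
  using sfun_shift[of c A x] sfun_odd[of c A "x - 2 * of_int \<lfloor>(x + 1) / 2\<rfloor>"] by auto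

lemma odd_ext_diff: "odd_ext (\<lambda>y. f y - g y) x = odd_ext f x - odd_ext g x"
  unfolding odd_ext_def Let_def by auto

lemma odd_ext_cong:
  assumes "\<And>y. 0 \<le> y \<Longrightarrow> y \<le> 1 \<Longrightarrow> f y = g y"
  shows "odd_ext f x = odd_ext g x"
proof -
  define y where "y = x - 2 * of_int \<lfloor>(x + 1) / 2\<rfloor>"
  have fl: "real_of_int \<lfloor>(x + 1) / 2\<rfloor> \<le> (x + 1) / 2" "(x + 1) / 2 < real_of_int \<lfloor>(x + 1) / 2\<rfloor> + 1"
    by (rule of_int_floor_le, rule real_of_int_floor_add_one_gt)
  have y1: "y < 1" using fl unfolding y_def by (simp add: field_simps)
  have y2: "-1 \<le> y" using fl unfolding y_def by (simp add: field_simps)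
  then show ?thesis unfolding odd_ext_def Let_def y_def[symmetric] using assms y1 y2 by auto
qed

lemma odd_ext_measurable:
  assumes g: "g \<in> borel_measurable M01"
  shows "odd_ext g \<in> borel_measurable lborel"
proof -
  define gt where "gt y = indicator {0<..<1} y *\<^sub>R g y + indicator {0} y *\<^sub>R g 0 + indicator {1} y *\<^sub>R g 1" for y
  have [measurable]: "(\<lambda>y. indicator {0<..<1::real} y *\<^sub>R g y) \<in> borel_measurable borel"
    using g by (subst (asm) borel_measurable_restrict_space_iff) auto
  have [measurable]: "gt \<in> borel_measurable borel" unfolding gt_def by measurable
  have eq: "odd_ext g = odd_ext gt"
    by (rule ext, rule odd_ext_cong) (auto simp: gt_def indicator_def)
  have "odd_ext gt \<in> borel_measurable borel" unfolding odd_ext_def Let_def by measurable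
  then show ?thesis unfolding eq by simp
qed


lemma sum_single_nat:
  fixes j k :: nat
  assumes "j < k" "\<And>i. i < k \<Longrightarrow> i \<noteq> j \<Longrightarrow> f i = 0"
  shows "(\<Sum>i<k. f i) = (f j :: ennreal)"
proof -
  have "(\<Sum>i<k. f i) = f j + (\<Sum>i\<in>{..<k}-{j}. f i)"
    using assms(1) by (intro sum.remove) auto
  also have "(\<Sum>i\<in>{..<k}-{j}. f i) = 0" using assms(2) by (intro sum.neutral) auto
  finally show ?thesis by simp
qed

lemma odd_ext_isometry:
  assumes g: "g \<in> borel_measurable M01" and k: "1 \<le> k"
  shows "N2 (\<lambda>x. odd_ext g (real k * x)) = N2 g"
proof -
  define W where "W y = ennreal ((cmod (g y))\<^sup>2) * indicator {0<..<1} y" for y :: real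
  have Wm[measurable]: "W \<in> borel_measurable borel"
  proof -
    have "(\<lambda>y. ennreal ((cmod (g y))\<^sup>2)) \<in> borel_measurable M01" using g by measurable
    then have "(\<lambda>y. ennreal ((cmod (g y))\<^sup>2) * indicator {0<..<1} y) \<in> borel_measurable lborel"
      by (subst (asm) borel_measurable_restrict_space_iff_ennreal) auto
    then show ?thesis unfolding W_def by simp
  qed
  have W0: "W y = 0" if "\<not> (0 < y \<and> y < 1)" for y using that unfolding W_def by auto
  define T where "T i x = (if even i then W (real k * x - real i) else W (real i + 1 - real k * x))" for i x
  have kpos: "real k > 0" using k by simp
  have pt: "ennreal ((cmod (odd_ext g (real k * x)))\<^sup>2) * indicator {0<..<1} x = (\<Sum>i<k. T i x)"
    if nint: "\<And>j::int. real k * x \<noteq> of_int j" for x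
  proof (cases "0 < x \<and> x < 1")
    case False
    have "T i x = 0" if "i < k" for i
    proof -
      have "\<not> (0 < real k * x - real i \<and> real k * x - real i < 1)"
      proof
        assume a: "0 < real k * x - real i \<and> real k * x - real i < 1"
        have ik: "real i + 1 \<le> real k" using that by linarith
        have "0 < real k * x" using a of_nat_0_le_iff[of i] by linarith
        then have "0 < x" using kpos by (simp add: zero_less_mult_iff)
        moreover have "real k * x < real k * 1" using a ik by linarith
        then have "x < 1" using kpos by simp
        ultimately show False using False by simp
      qed
      moreover have "\<not> (0 < real i + 1 - real k * x \<and> real i + 1 - real k * x < 1)"
      proof
        assume a: "0 < real i + 1 - real k * x \<and> real i + 1 - real k * x < 1"
        have ik: "real i + 1 \<le> real k" using that by linarith
        have "0 < real k * x" using a of_nat_0_le_iff[of i] ik by linarith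
        then have "0 < x" using kpos by (simp add: zero_less_mult_iff)
        moreover have "real k * x < real k * 1" using a ik by linarith
        then have "x < 1" using kpos by simp
        ultimately show False using False by simp
      qed
      ultimately show ?thesis unfolding T_def using W0 by auto
    qed
    then show ?thesis using False by (simp add: indicator_def)
  next
    case True
    define j where "j = \<lfloor>real k * x\<rfloor>"
    have jl: "of_int j < real k * x" "real k * x < of_int j + 1"
      using nint[of j] nint[of "j+1"] unfolding j_def by (auto simp: order.strict_iff_order)
    have "0 < real k * x" using True kpos by simp
    then have j0: "0 \<le> j" unfolding j_def by simp
    have jk: "j < int k"
    proof -
      have "real k * x < real k" using True kpos by simp
      then show ?thesis using jl by linarith
    qed
    define jn where "jn = nat j"
    have jn: "real jn = of_int j" "jn < k" using j0 jk unfolding jn_def by auto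
    have others: "T i x = 0" if "i < k" "i \<noteq> jn" for i
    proof -
      have "\<not> (0 < real k * x - real i \<and> real k * x - real i < 1)"
      proof
        assume a: "0 < real k * x - real i \<and> real k * x - real i < 1"
        then have "\<lfloor>real k * x\<rfloor> = int i" by (intro floor_unique) auto
        then show False using that j0 unfolding j_def jn_def by auto
      qed
      moreover have "\<not> (0 < real i + 1 - real k * x \<and> real i + 1 - real k * x < 1)"
      proof
        assume a: "0 < real i + 1 - real k * x \<and> real i + 1 - real k * x < 1"
        then have "\<lfloor>real k * x\<rfloor> = int i" by (intro floor_unique) auto
        then show False using that j0 unfolding j_def jn_def by auto
      qed
      ultimately show ?thesis unfolding T_def using W0 by auto
    qed
    have sumeq: "(\<Sum>i<k. T i x) = T jn x" by (rule sum_single_nat[OF jn(2) others]) auto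
    define m where "m = \<lfloor>(real k * x + 1) / 2\<rfloor>"
    show ?thesis
    proof (cases "even jn")
      case True
      then obtain q where q: "jn = 2 * q" by (auto elim: evenE)
      have "m = int q"
        unfolding m_def by (rule floor_unique) (use jl jn(1) q in auto)
      then have y: "real k * x - 2 * of_int m = real k * x - real jn" using q by simp
      have ypos: "0 < real k * x - real jn" "real k * x - real jn < 1" using jl jn(1) by auto
      have "odd_ext g (real k * x) = g (real k * x - real jn)"
        unfolding odd_ext_def Let_def m_def[symmetric] y using ypos by simp
      then show ?thesis using sumeq \<open>0 < x \<and> x < 1\<close> ypos
        unfolding T_def W_def using True by (simp add: indicator_def)
    next
      case False
      then obtain q where q: "jn = 2 * q + 1" by (auto elim: oddE)
      have "m = int q + 1"
        unfolding m_def by (rule floor_unique) (use jl jn(1) q in auto)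
      then have y: "real k * x - 2 * of_int m = real k * x - real jn - 1" using q by simp
      have yneg: "0 < real jn + 1 - real k * x" "real jn + 1 - real k * x < 1" using jl jn(1) by auto
      have "odd_ext g (real k * x) = - g (real jn + 1 - real k * x)"
        unfolding odd_ext_def Let_def m_def[symmetric] y using yneg by (simp add: algebra_simps)
      then show ?thesis using sumeq \<open>0 < x \<and> x < 1\<close> yneg
        unfolding T_def W_def using False by (simp add: indicator_def)
    qed
  qed
  have ae: "AE x in lborel. ennreal ((cmod (odd_ext g (real k * x)))\<^sup>2) * indicator {0<..<1} x = (\<Sum>i<k. T i x)"
  proof -
    have "countable (range (\<lambda>j::int. of_int j / real k))" by simp
    then have "range (\<lambda>j::int. of_int j / real k) \<in> null_sets lborel" by (rule countable_imp_null_set_lborel)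
    then have "AE x in lborel. x \<notin> range (\<lambda>j::int. of_int j / real k)" by (rule AE_not_in)
    then show ?thesis
    proof (rule AE_mp, intro AE_I2 impI)
      fix x assume "x \<notin> range (\<lambda>j::int. of_int j / real k)"
      then have "real k * x \<noteq> of_int j" for j
        using kpos by (auto simp: field_simps image_iff)
      then show "ennreal ((cmod (odd_ext g (real k * x)))\<^sup>2) * indicator {0<..<1} x = (\<Sum>i<k. T i x)"
        by (rule pt)
    qed
  qed
  have Tint: "ennreal (real k) * (\<integral>\<^sup>+x. T i x \<partial>lborel) = (\<integral>\<^sup>+x. W x \<partial>lborel)" for i
  proof (cases "even i")
    case True
    have "(\<integral>\<^sup>+x. W x \<partial>lborel) = ennreal \<bar>real k\<bar> * (\<integral>\<^sup>+x. W (- real i + real k * x) \<partial>lborel)"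
      by (rule nn_integral_real_affine[OF Wm]) (use kpos in auto)
    then show ?thesis unfolding T_def using True by (simp add: algebra_simps)
  next
    case False
    have "(\<integral>\<^sup>+x. W x \<partial>lborel) = ennreal \<bar>- real k\<bar> * (\<integral>\<^sup>+x. W ((real i + 1) + (- real k) * x) \<partial>lborel)"
      by (rule nn_integral_real_affine[OF Wm]) (use kpos in auto)
    then show ?thesis unfolding T_def using False by (simp add: algebra_simps)
  qed
  have "N2 (\<lambda>x. odd_ext g (real k * x)) = (\<integral>\<^sup>+x. (\<Sum>i<k. T i x) \<partial>lborel)"
    unfolding N2_def by (rule nn_integral_cong_AE[OF ae])
  also have "\<dots> = (\<Sum>i<k. \<integral>\<^sup>+x. T i x \<partial>lborel)"
    by (rule nn_integral_sum) (unfold T_def, measurable)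
  also have "\<dots> = (\<Sum>i<k. \<integral>\<^sup>+x. T 0 x \<partial>lborel)"
  proof (rule sum.cong[OF refl])
    fix i
    have "ennreal (real k) * (\<integral>\<^sup>+x. T i x \<partial>lborel) = ennreal (real k) * (\<integral>\<^sup>+x. T 0 x \<partial>lborel)"
      using Tint[of i] Tint[of 0] by simp
    then show "(\<integral>\<^sup>+x. T i x \<partial>lborel) = (\<integral>\<^sup>+x. T 0 x \<partial>lborel)"
      using kpos by (simp add: ennreal_mult_cancel_left)
  qed
  also have "\<dots> = ennreal (real k) * (\<integral>\<^sup>+x. T 0 x \<partial>lborel)"
    by (simp add: ennreal_of_nat_eq_real_of_nat)
  also have "\<dots> = N2 g" unfolding Tint N2_def W_def ..
  finally show ?thesis .
qed


definition dilc :: "nat \<Rightarrow> (nat \<Rightarrow> 'a::zero) \<Rightarrow> nat \<Rightarrow> 'a" where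
  "dilc k b t = (if k dvd t then b (t div k) else 0)"

lemma sum_dil:
  fixes f :: "nat \<Rightarrow> 'a::comm_monoid_add"
  assumes k: "1 \<le> k"
  shows "(\<Sum>t\<in>{1..n}. dilc k f t) = (\<Sum>s\<in>{1..n div k}. f s)"
proof -
  have "(\<Sum>t\<in>{1..n}. dilc k f t) = (\<Sum>t\<in>{t\<in>{1..n}. k dvd t}. f (t div k))"
    unfolding dilc_def by (rule sum.inter_filter[symmetric]) simp
  also have "{t\<in>{1..n}. k dvd t} = (\<lambda>s. k * s) ` {1..n div k}"
  proof (intro equalityI subsetI)
    fix t assume t: "t \<in> {t\<in>{1..n}. k dvd t}"
    then have "t = k * (t div k)" by auto
    moreover have "t div k \<in> {1..n div k}"
    proof -
      have "1 \<le> t div k" using t k by (auto elim!: dvdE)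
      moreover have "t div k \<le> n div k" using t by (intro div_le_mono) auto
      ultimately show ?thesis by auto
    qed
    ultimately show "t \<in> (\<lambda>s. k * s) ` {1..n div k}" by blast
  next
    fix t assume "t \<in> (\<lambda>s. k * s) ` {1..n div k}"
    then obtain s where s0: "t = k * s" "s \<in> {1..n div k}" by blast
    then have s: "t = k * s" "1 \<le> s" "s \<le> n div k" by auto
    have "k * s \<le> k * (n div k)" using s by simp
    also have "\<dots> \<le> n" by simp
    finally show "t \<in> {t\<in>{1..n}. k dvd t}" using s k by auto
  qed
  also have "(\<Sum>t\<in>(\<lambda>s. k * s) ` {1..n div k}. f (t div k)) = (\<Sum>s\<in>{1..n div k}. f s)"
    using k by (subst sum.reindex) (auto simp: inj_on_def)
  finally show ?thesis .
qed

lemma sine_partial_dil: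
  assumes k: "1 \<le> k"
  shows "sine_partial (dilc k b) n x = sine_partial b (n div k) (real k * x)"
proof -
  define E where "E t = complex_of_real (sqrt 2 * sin (pi * real t * x))" for t
  have "sine_partial (dilc k b) n x = (\<Sum>t\<in>{1..n}. dilc k b t * E t)"
    unfolding sine_partial_def E_def ..
  also have "\<dots> = (\<Sum>t\<in>{1..n}. dilc k (\<lambda>s. b s * E (k * s)) t)"
    by (intro sum.cong) (auto simp: dilc_def)
  also have "\<dots> = (\<Sum>s\<in>{1..n div k}. b s * E (k * s))" by (rule sum_dil[OF k])
  also have "\<dots> = sine_partial b (n div k) (real k * x)"
    unfolding sine_partial_def E_def by (simp add: mult.commute mult.left_commute)
  finally show ?thesis .
qed

lemma odd_ext_comp_measurable:
  assumes "g \<in> borel_measurable M01"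
  shows "(\<lambda>x. odd_ext g (real k * x)) \<in> borel_measurable M01"
proof -
  have [measurable]: "odd_ext g \<in> borel_measurable borel" using odd_ext_measurable[OF assms] by simp
  have "(\<lambda>x. odd_ext g (real k * x)) \<in> borel_measurable borel" by measurable
  then show ?thesis by (intro measurable_restrict_space1) simp
qed

lemma L2_sine_sum_dil:
  assumes F: "L2_sine_sum b F" and k: "1 \<le> k"
  shows "L2_sine_sum (dilc k b) (\<lambda>x. odd_ext F (real k * x))"
proof -
  note FF = L2_sine_sumD[OF F]
  have mem: "(\<lambda>x. odd_ext F (real k * x)) \<in> L2_01"
    unfolding L2_01_iff using odd_ext_comp_measurable[OF FF(2)] odd_ext_isometry[OF FF(2) k] FF(3) by simp
  have eq: "L2_dist2 (sine_partial (dilc k b) n) (\<lambda>x. odd_ext F (real k * x)) =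
            L2_dist2 (sine_partial b (n div k)) F" for n
  proof -
    have "L2_dist2 (sine_partial (dilc k b) n) (\<lambda>x. odd_ext F (real k * x)) =
          N2 (\<lambda>x. odd_ext (\<lambda>y. sine_partial b (n div k) y - F y) (real k * x))"
      unfolding L2_dist2_N2 sine_partial_dil[OF k] odd_ext_diff
      by (simp add: sine_partial_sfun odd_ext_sfun)
    also have "\<dots> = N2 (\<lambda>y. sine_partial b (n div k) y - F y)"
      by (rule odd_ext_isometry[OF _ k]) (use FF(2) sine_partial_measurable in auto)
    finally show ?thesis unfolding L2_dist2_N2 .
  qed
  have "(\<lambda>n. L2_dist2 (sine_partial b (n div k)) F) \<longlonglongrightarrow> 0"
    by (rule filterlim_compose[OF FF(4) filterlim_at_top_div_const_nat]) (use k in simp)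
  then show ?thesis unfolding L2_sine_sum_def eq using mem by simp
qed


definition Bc :: "(nat \<Rightarrow> complex) \<Rightarrow> nat \<Rightarrow> complex" where
  "Bc c t = (\<Sum>n\<in>{1..t}. if n dvd t then c n * of_nat n / of_nat t else 0)"

lemma Bc_lin: "Bc (\<lambda>n. c n + a * d n) t = Bc c t + a * Bc d t"
proof -
  have "\<And>n. (if n dvd t then (c n + a * d n) * of_nat n / of_nat t else 0) =
     (if n dvd t then c n * of_nat n / of_nat t else 0) + a * (if n dvd t then d n * of_nat n / of_nat t else 0)"
    by (auto simp: algebra_simps add_divide_distrib)
  then show ?thesis unfolding Bc_def by (simp only: sum.distrib sum_distrib_left)
qed

lemma Bc_sum: "Bc (\<lambda>n. \<Sum>k\<in>K. f k n) t = (\<Sum>k\<in>K. Bc (f k) t)"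
proof -
  have "Bc (\<lambda>n. \<Sum>k\<in>K. f k n) t = (\<Sum>n\<in>{1..t}. \<Sum>k\<in>K. if n dvd t then f k n * of_nat n / of_nat t else 0)"
    unfolding Bc_def by (intro sum.cong) (auto simp: sum_distrib_right sum_divide_distrib)
  also have "\<dots> = (\<Sum>k\<in>K. Bc (f k) t)" unfolding Bc_def by (rule sum.swap)
  finally show ?thesis .
qed

lemma Bc_dil:
  assumes p: "1 \<le> p"
  shows "Bc (dilc p c) t = dilc p (Bc c) t"
proof (cases "p dvd t")
  case False
  have "Bc (dilc p c) t = 0" unfolding Bc_def
    by (intro sum.neutral) (use False in \<open>auto simp: dilc_def intro: dvd_trans\<close>)
  then show ?thesis using False by (simp add: dilc_def)
next
  case True
  then obtain m where m: "t = p * m" by (auto elim: dvdE)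
  have "Bc (dilc p c) t = (\<Sum>n\<in>{1..t}. dilc p (\<lambda>s. if s dvd m then c s * of_nat s / of_nat m else 0) n)"
    unfolding Bc_def
  proof (intro sum.cong refl)
    fix n assume n: "n \<in> {1..t}"
    show "(if n dvd t then dilc p c n * of_nat n / of_nat t else 0) =
          dilc p (\<lambda>s. if s dvd m then c s * of_nat s / of_nat m else 0) n"
    proof (cases "p dvd n")
      case True
      then obtain s where s: "n = p * s" by (auto elim: dvdE)
      have "(n dvd t) = (s dvd m)" using s m p by auto
      moreover have "c s * of_nat n / of_nat t = c s * of_nat s / of_nat m"
        using s m p by (cases "m = 0") (auto simp: field_simps)
      ultimately show ?thesis using s p by (auto simp: dilc_def)
    qed (auto simp: dilc_def)
  qed
  also have "\<dots> = (\<Sum>s\<in>{1..t div p}. if s dvd m then c s * of_nat s / of_nat m else 0)"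
    by (rule sum_dil[OF p])
  also have "t div p = m" using m p by simp
  also have "(\<Sum>s\<in>{1..m}. if s dvd m then c s * of_nat s / of_nat m else 0) = Bc c m" unfolding Bc_def ..
  also have "Bc c m = dilc p (Bc c) t" using True m p by (simp add: dilc_def)
  finally show ?thesis .
qed

lemma supp_dil:
  assumes "\<And>n. n \<notin> {1..N} \<Longrightarrow> c n = 0" "1 \<le> p"
  shows "\<And>n. n \<notin> {1..p * N} \<Longrightarrow> dilc p c n = 0"
proof -
  fix n assume n: "n \<notin> {1..p * N}"
  show "dilc p c n = 0"
  proof (cases "p dvd n")
    case True
    then obtain s where s: "n = p * s" by (auto elim: dvdE)
    have "s \<notin> {1..N}" using n s assms(2) by auto
    then show ?thesis using s assms by (simp add: dilc_def)
  qed (simp add: dilc_def)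
qed

lemma prime_div_dvd:
  fixes p q t :: nat
  assumes "prime p" "prime q" "p \<noteq> q" "p dvd t"
  shows "q dvd t div p \<longleftrightarrow> q dvd t"
proof
  assume "q dvd t div p"
  then show "q dvd t" using assms(4) by (metis dvd_mult2 dvd_mult_div_cancel mult.commute)
next
  assume "q dvd t"
  then have "q dvd p * (t div p)" using assms(4) by simp
  then have "q dvd p \<or> q dvd t div p" using assms(2) prime_dvd_mult_iff by blast
  moreover have "\<not> q dvd p" using assms primes_dvd_imp_eq by blast
  ultimately show "q dvd t div p" by blast
qed

lemma psi_exists:
  assumes "finite Q" "\<forall>q\<in>Q. prime q"
  shows "\<exists>N c. (\<forall>n. n \<notin> {1..N} \<longrightarrow> c n = 0) \<and>
                 (\<forall>t. Bc c t = (if (\<forall>q\<in>Q. \<not> q dvd t) then 1 / of_nat t else 0))"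
  using assms
proof (induction Q rule: finite_induct)
  case empty
  define c :: "nat \<Rightarrow> complex" where "c n = (if n = 1 then 1 else 0)" for n
  have "Bc c t = 1 / of_nat t" for t
  proof (cases "t = 0")
    case False
    have "Bc c t = (\<Sum>n\<in>{1..t}. if n = 1 then 1 / of_nat t else 0)"
      unfolding Bc_def c_def by (intro sum.cong) auto
    also have "\<dots> = 1 / of_nat t" using False by (subst sum.delta) auto
    finally show ?thesis .
  qed (simp add: Bc_def)
  moreover have "\<forall>n. n \<notin> {1..1} \<longrightarrow> c n = 0" by (auto simp: c_def)
  ultimately show ?case by (intro exI[of _ 1] exI[of _ c]) auto
next
  case (insert p Q)
  then obtain N c where supp: "\<forall>n. n \<notin> {1..N} \<longrightarrow> c n = 0"
      and B: "\<forall>t. Bc c t = (if (\<forall>q\<in>Q. \<not> q dvd t) then 1 / of_nat t else 0)" by auto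
  have pp: "prime p" using insert by auto
  then have p1: "1 \<le> p" using prime_ge_1_nat by blast
  have p2: "2 \<le> p" using pp prime_ge_2_nat by blast
  define c' where "c' n = c n + (- 1 / of_nat p) * dilc p c n" for n
  have supp': "\<forall>n. n \<notin> {1..p * N} \<longrightarrow> c' n = 0"
  proof (intro allI impI)
    fix n assume n: "n \<notin> {1..p * N}"
    have NN: "N \<le> p * N" using mult_le_mono1[OF p1, of N] by simp
    have "n \<notin> {1..N}" by (metis NN atLeastAtMost_iff le_trans n)
    then show "c' n = 0" unfolding c'_def using supp supp_dil[of N c p] p1 n by auto
  qed
  have B': "Bc c' t = (if (\<forall>q\<in>insert p Q. \<not> q dvd t) then 1 / of_nat t else 0)" for t
  proof -
    have eq: "Bc c' t = Bc c t + (- 1 / of_nat p) * dilc p (Bc c) t"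
      unfolding c'_def Bc_lin Bc_dil[OF p1] ..
    show ?thesis
    proof (cases "p dvd t")
      case False
      then show ?thesis unfolding eq using B by (simp add: dilc_def)
    next
      case True
      show ?thesis
      proof (cases "t = 0")
        case True
        then show ?thesis unfolding eq using B by (simp add: dilc_def)
      next
        case False
        have qq: "(q dvd t div p) = (q dvd t)" if "q \<in> Q" for q
        proof -
          have "prime q" "q \<noteq> p" using that insert.hyps insert.prems by auto
          then show ?thesis using prime_div_dvd[OF pp _ _ \<open>p dvd t\<close>] by metis
        qed
        have chi: "(\<forall>q\<in>Q. \<not> q dvd t div p) = (\<forall>q\<in>Q. \<not> q dvd t)"
          using qq by auto
        have tp: "of_nat t = (of_nat p * of_nat (t div p) :: complex)"
          using \<open>p dvd t\<close> by (simp flip: of_nat_mult)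
        have "t div p \<noteq> 0" using False \<open>p dvd t\<close> by auto
        then have "Bc c t + (- 1 / of_nat p) * dilc p (Bc c) t = 0"
          using B \<open>p dvd t\<close> chi p1 tp by (auto simp: dilc_def field_simps)
        then show ?thesis unfolding eq using \<open>p dvd t\<close> by auto
      qed
    qed
  qed
  show ?case using supp' B' by blast
qed


definition Gfun :: "(real \<Rightarrow> complex) \<Rightarrow> nat \<Rightarrow> (nat \<Rightarrow> complex) \<Rightarrow> real \<Rightarrow> complex" where
  "Gfun f N c x = (\<Sum>n\<in>{1..N}. c n * odd_ext f (real n * x))"

lemma GS_aux:
  assumes f: "L2_sine_sum acoef f"
  shows "L2_sine_sum (\<lambda>t. \<Sum>n\<in>{1..N}. c n * dilc n acoef t) (Gfun f N c)"
proof (induction N)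
  case 0
  have "L2_sine_sum (\<lambda>t. 0) (sfun (\<lambda>t. 0) {1..0})" by (rule L2_sine_sum_finite) simp
  moreover have "sfun (\<lambda>t. 0) {1..0} = Gfun f 0 c" by (rule ext) (simp add: sfun_def Gfun_def)
  ultimately show ?case by simp
next
  case (Suc N)
  have "L2_sine_sum (\<lambda>t. (\<Sum>n\<in>{1..N}. c n * dilc n acoef t) + c (Suc N) * dilc (Suc N) acoef t)
          (\<lambda>x. Gfun f N c x + c (Suc N) * odd_ext f (real (Suc N) * x))"
    by (rule L2_sine_sum_lin[OF Suc L2_sine_sum_dil[OF f]]) simp
  moreover have "(\<lambda>x. Gfun f N c x + c (Suc N) * odd_ext f (real (Suc N) * x)) = Gfun f (Suc N) c"
    by (rule ext) (simp add: Gfun_def)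
  moreover have "(\<lambda>t. (\<Sum>n\<in>{1..N}. c n * dilc n acoef t) + c (Suc N) * dilc (Suc N) acoef t) =
                 (\<lambda>t. \<Sum>n\<in>{1..Suc N}. c n * dilc n acoef t)"
    by (rule ext) simp
  ultimately show ?case by simp
qed

lemma GS_coeff:
  assumes supp: "\<And>n. n \<notin> {1..N} \<Longrightarrow> c n = 0"
  shows "(\<Sum>n\<in>{1..N}. c n * dilc n acoef t) = Bc c t"
proof (cases "t = 0")
  case True
  then show ?thesis by (simp add: dilc_def acoef_def Bc_def)
next
  case False
  have "(\<Sum>n\<in>{1..N}. c n * dilc n acoef t) = (\<Sum>n\<in>{1..N}. if n dvd t then c n * of_nat n / of_nat t else 0)"
  proof (intro sum.cong refl)
    fix n assume n: "n \<in> {1..N}"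
    show "c n * dilc n acoef t = (if n dvd t then c n * of_nat n / of_nat t else 0)"
    proof (cases "n dvd t")
      case True
      then obtain m where m: "t = n * m" by (auto elim: dvdE)
      then have "m \<noteq> 0" using False by auto
      then show ?thesis using m n by (auto simp: dilc_def acoef_def field_simps)
    qed (simp add: dilc_def)
  qed
  also have "\<dots> = (\<Sum>n\<in>{1..N+t}. if n dvd t then c n * of_nat n / of_nat t else 0)"
    by (rule sum.mono_neutral_left) (use supp in auto)
  also have "\<dots> = Bc c t" unfolding Bc_def
    by (rule sum.mono_neutral_right) (use False in \<open>auto dest: dvd_imp_le\<close>)
  finally show ?thesis .
qed

lemma GS:
  assumes f: "L2_sine_sum acoef f" and supp: "\<And>n. n \<notin> {1..N} \<Longrightarrow> c n = 0"
  shows "L2_sine_sum (Bc c) (Gfun f N c)"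
  using GS_aux[OF f, where N=N and c=c] GS_coeff[OF supp] by simp

lemma tail_bound:
  assumes P: "1 \<le> P"
  shows "(\<Sum>s\<in>{1..m}. if P < s then 1 / (real s)\<^sup>2 else 0) \<le> 1 / real P - 1 / real (max m P)"
proof (induction m)
  case 0
  then show ?case using P by simp
next
  case (Suc m)
  show ?case
  proof (cases "Suc m \<le> P")
    case True
    have "(\<Sum>s\<in>{1..Suc m}. if P < s then 1 / (real s)\<^sup>2 else 0) = 0" using True by (intro sum.neutral) auto
    then show ?thesis using True by (simp add: max_def)
  next
    case False
    then have mP: "P \<le> m" by simp
    have "(\<Sum>s\<in>{1..Suc m}. if P < s then 1 / (real s)\<^sup>2 else 0) =
          (\<Sum>s\<in>{1..m}. if P < s then 1 / (real s)\<^sup>2 else 0) + 1 / (real (Suc m))\<^sup>2"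
      using False by simp
    also have "\<dots> \<le> 1 / real P - 1 / real m + 1 / (real (Suc m))\<^sup>2"
      using Suc mP by (simp add: max_def)
    also have "\<dots> \<le> 1 / real P - 1 / real (Suc m)"
    proof -
      have m1: "real m \<ge> 1" using mP P by simp
      have e1: "1 / real m - 1 / real (Suc m) = 1 / (real m * real (Suc m))"
        using m1 by (simp add: field_simps)
      have "real m * real (Suc m) \<le> (real (Suc m))\<^sup>2" by (simp add: power2_eq_square)
      then have "1 / (real (Suc m))\<^sup>2 \<le> 1 / (real m * real (Suc m))"
        using m1 by (intro divide_left_mono) auto
      then have "1 / (real (Suc m))\<^sup>2 \<le> 1 / real m - 1 / real (Suc m)" using e1 by simp
      then show ?thesis by simp
    qed
    finally show ?thesis using False by (simp add: max_def)
  qed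
qed

lemma Bc_scal: "Bc (\<lambda>n. a * d n) t = a * Bc d t"
  unfolding Bc_def sum_distrib_left by (intro sum.cong) auto

lemma dilc_diff:
  fixes f g :: "nat \<Rightarrow> complex"
  shows "dilc k f t - dilc k g t = dilc k (\<lambda>s. f s - g s) t"
  by (simp add: dilc_def)

lemma approx_coeffs:
  assumes eps: "0 < \<epsilon>"
  shows "\<exists>N c. (\<forall>n. n \<notin> {1..N} \<longrightarrow> c n = 0) \<and>
     (\<forall>n. (\<Sum>t\<in>{1..n}. (cmod (Bc c t - (if t \<in> {1..K} then \<beta> t else 0)))\<^sup>2) \<le> \<epsilon>)"
proof -
  define S where "S = (\<Sum>k\<in>{1..K}. (cmod (\<beta> k))\<^sup>2)"
  have S0: "0 \<le> S" unfolding S_def by (intro sum_nonneg) auto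
  define P :: nat where "P = nat \<lceil>S * K / \<epsilon>\<rceil> + 1"
  have P1: "1 \<le> P" unfolding P_def by simp
  have PS: "S * K / \<epsilon> \<le> real P" unfolding P_def by linarith
  define Q where "Q = {q::nat. prime q \<and> q \<le> P}"
  have Qf: "finite Q" unfolding Q_def by (rule finite_subset[of _ "{..P}"]) auto
  obtain N0 c0 where supp0: "\<forall>n. n \<notin> {1..N0} \<longrightarrow> c0 n = 0"
    and B0: "\<forall>t. Bc c0 t = (if (\<forall>q\<in>Q. \<not> q dvd t) then 1 / of_nat t else 0)"
    using psi_exists[OF Qf] unfolding Q_def by auto
  define E where "E t = Bc c0 t - (if t = 1 then 1 else 0)" for t
  have Eb: "(cmod (E t))\<^sup>2 \<le> (if P < t then 1 / (real t)\<^sup>2 else 0)" for t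
  proof (cases "t \<le> 1")
    case True
    then consider "t = 0" | "t = 1" by linarith
    then have "E t = 0"
    proof cases
      case 1 then show ?thesis using B0 by (simp add: E_def)
    next
      case 2
      have "\<forall>q\<in>Q. \<not> q dvd 1" unfolding Q_def by auto
      then show ?thesis using B0 2 by (simp add: E_def)
    qed
    then show ?thesis by simp
  next
    case False
    show ?thesis
    proof (cases "\<forall>q\<in>Q. \<not> q dvd t")
      case True
      have "P < t"
      proof (rule ccontr)
        assume "\<not> P < t"
        obtain q where q: "prime q" "q dvd t" using prime_factor_nat[of t] False by auto
        have "q \<le> t" using q False by (intro dvd_imp_le) auto
        then have "q \<in> Q" using q \<open>\<not> P < t\<close> unfolding Q_def by auto
        then show False using True q by auto
      qed
      then show ?thesis using True B0 False
        by (simp add: E_def norm_divide power_one_over)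
    next
      case False2: False
      have "Bc c0 t = 0" using B0 False2 by metis
      then have "E t = 0" using False by (simp add: E_def)
      then show ?thesis by simp
    qed
  qed
  define c where "c n = (\<Sum>k\<in>{1..K}. \<beta> k * dilc k c0 n)" for n
  have supp: "\<forall>n. n \<notin> {1..K * N0} \<longrightarrow> c n = 0"
  proof (intro allI impI)
    fix n assume n: "n \<notin> {1..K * N0}"
    have "dilc k c0 n = 0" if k: "k \<in> {1..K}" for k
    proof -
      have kk: "k * N0 \<le> K * N0" using k by (intro mult_le_mono1) auto
      have "n \<notin> {1..k * N0}" by (metis kk atLeastAtMost_iff le_trans n)
      then show ?thesis using supp_dil[of N0 c0 k] supp0 k by auto
    qed
    then show "c n = 0" unfolding c_def by simp
  qed
  have diff: "Bc c t - (if t \<in> {1..K} then \<beta> t else 0) = (\<Sum>k\<in>{1..K}. \<beta> k * dilc k E t)" for t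
  proof -
    have "Bc c t = (\<Sum>k\<in>{1..K}. \<beta> k * dilc k (Bc c0) t)"
      unfolding c_def Bc_sum Bc_scal by (intro sum.cong) (auto simp: Bc_dil)
    moreover have "(if t \<in> {1..K} then \<beta> t else 0) = (\<Sum>k\<in>{1..K}. \<beta> k * dilc k (\<lambda>s. if s = 1 then 1 else 0) t)"
    proof -
      have "(\<Sum>k\<in>{1..K}. \<beta> k * dilc k (\<lambda>s. if s = 1 then 1 else 0) t) = (\<Sum>k\<in>{1..K}. if t = k then \<beta> k else 0)"
        by (intro sum.cong) (auto simp: dilc_def elim!: dvdE)
      also have "\<dots> = (if t \<in> {1..K} then \<beta> t else 0)" by (simp add: sum.delta)
      finally show ?thesis by simp
    qed
    ultimately have "Bc c t - (if t \<in> {1..K} then \<beta> t else 0) =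
       (\<Sum>k\<in>{1..K}. \<beta> k * dilc k (Bc c0) t - \<beta> k * dilc k (\<lambda>s. if s = 1 then 1 else 0) t)"
      by (simp only: sum_subtractf)
    also have "\<dots> = (\<Sum>k\<in>{1..K}. \<beta> k * dilc k E t)"
      unfolding E_def by (intro sum.cong refl) (simp only: right_diff_distrib[symmetric] dilc_diff)
    finally show ?thesis .
  qed
  have bound: "(\<Sum>t\<in>{1..n}. (cmod (Bc c t - (if t \<in> {1..K} then \<beta> t else 0)))\<^sup>2) \<le> \<epsilon>" for n
  proof -
    have "(\<Sum>t\<in>{1..n}. (cmod (Bc c t - (if t \<in> {1..K} then \<beta> t else 0)))\<^sup>2) \<le>
          (\<Sum>t\<in>{1..n}. S * (\<Sum>k\<in>{1..K}. dilc k (\<lambda>s. (cmod (E s))\<^sup>2) t))"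
    proof (rule sum_mono)
      fix t
      have "(cmod (\<Sum>k\<in>{1..K}. \<beta> k * dilc k E t))\<^sup>2 \<le> (\<Sum>k\<in>{1..K}. cmod (\<beta> k) * cmod (dilc k E t))\<^sup>2"
        by (intro power_mono order.trans[OF norm_sum]) (auto simp: norm_mult)
      also have "\<dots> \<le> S * (\<Sum>k\<in>{1..K}. (cmod (dilc k E t))\<^sup>2)"
        unfolding S_def by (rule Cauchy_Schwarz_ineq_sum)
      also have "(\<Sum>k\<in>{1..K}. (cmod (dilc k E t))\<^sup>2) = (\<Sum>k\<in>{1..K}. dilc k (\<lambda>s. (cmod (E s))\<^sup>2) t)"
        by (intro sum.cong) (auto simp: dilc_def)
      finally show "(cmod (Bc c t - (if t \<in> {1..K} then \<beta> t else 0)))\<^sup>2 \<le> S * (\<Sum>k\<in>{1..K}. dilc k (\<lambda>s. (cmod (E s))\<^sup>2) t)"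
        unfolding diff .
    qed
    also have "\<dots> = S * (\<Sum>k\<in>{1..K}. \<Sum>t\<in>{1..n}. dilc k (\<lambda>s. (cmod (E s))\<^sup>2) t)"
      by (simp only: sum_distrib_left[symmetric] sum.swap[of _ "{1..n}"])
    also have "\<dots> = S * (\<Sum>k\<in>{1..K}. \<Sum>s\<in>{1..n div k}. (cmod (E s))\<^sup>2)"
      by (intro arg_cong[where f="\<lambda>x. S * x"] sum.cong refl sum_dil) auto
    also have "\<dots> \<le> S * (\<Sum>k\<in>{1..K}. 1 / real P)"
    proof (intro mult_left_mono S0 sum_mono)
      fix k
      have "(\<Sum>s\<in>{1..n div k}. (cmod (E s))\<^sup>2) \<le> (\<Sum>s\<in>{1..n div k}. if P < s then 1 / (real s)\<^sup>2 else 0)"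
        by (intro sum_mono Eb)
      also have "\<dots> \<le> 1 / real P - 1 / real (max (n div k) P)" by (rule tail_bound[OF P1])
      also have "\<dots> \<le> 1 / real P" by simp
      finally show "(\<Sum>s\<in>{1..n div k}. (cmod (E s))\<^sup>2) \<le> 1 / real P" .
    qed
    also have "\<dots> = S * K / real P" by simp
    also have "\<dots> \<le> \<epsilon>"
    proof -
      have "S * K \<le> \<epsilon> * real P" using PS eps by (simp add: field_simps)
      then show ?thesis using P1 by (simp add: field_simps)
    qed
    finally show ?thesis .
  qed
  show ?thesis using supp bound by blast
qed


definition SP :: "(real \<Rightarrow> complex) \<Rightarrow> bool" where
  "SP f \<longleftrightarrow> (\<exists>K \<beta>. \<forall>x. f x = sfun \<beta> {1..K} x)"

lemma sfun_pad:
  assumes "K \<le> L"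
  shows "sfun \<beta> {1..K} x = sfun (\<lambda>k. if k \<le> K then \<beta> k else 0) {1..L} x"
  unfolding sfun_def using assms by (intro sum.mono_neutral_cong_left) auto

lemma SP_add: assumes "SP f" "SP g" shows "SP (\<lambda>x. f x + g x)"
proof -
  obtain K1 b1 where 1: "\<forall>x. f x = sfun b1 {1..K1} x" using assms(1) unfolding SP_def by auto
  obtain K2 b2 where 2: "\<forall>x. g x = sfun b2 {1..K2} x" using assms(2) unfolding SP_def by auto
  define b where "b k = (if k \<le> K1 then b1 k else 0) + (if k \<le> K2 then b2 k else 0)" for k
  have "f x + g x = sfun b {1..K1+K2} x" for x
    using 1 2 sfun_pad[of K1 "K1+K2" b1 x] sfun_pad[of K2 "K1+K2" b2 x]
    unfolding b_def sfun_def by (simp add: sum.distrib algebra_simps)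
  then show ?thesis unfolding SP_def by blast
qed

lemma SP_scal: assumes "SP f" shows "SP (\<lambda>x. c * f x)"
proof -
  obtain K b where 1: "\<forall>x. f x = sfun b {1..K} x" using assms(1) unfolding SP_def by auto
  have "c * f x = sfun (\<lambda>k. c * b k) {1..K} x" for x
    using 1 unfolding sfun_def by (simp add: sum_distrib_left mult.assoc)
  then show ?thesis unfolding SP_def by blast
qed

lemma SP_zero: "SP (\<lambda>x. 0)"
  unfolding SP_def by (rule exI[of _ 0]) (simp add: sfun_def)

lemma SP_sum: assumes "finite I" "\<And>i. i \<in> I \<Longrightarrow> SP (f i)" shows "SP (\<lambda>x. \<Sum>i\<in>I. f i x)"
  using assms by (induction I rule: finite_induct) (auto intro: SP_add SP_zero)

lemma SP_sin: "SP (\<lambda>x. complex_of_real (sin (pi * real k * x)))"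
proof (cases "k = 0")
  case True then show ?thesis using SP_zero by simp
next
  case False
  have "complex_of_real (sin (pi * real k * x)) = sfun (\<lambda>j. if j = k then 1 / sqrt 2 else 0) {1..k} x" for x
  proof -
    have "sfun (\<lambda>j. if j = k then 1 / sqrt 2 else 0) {1..k} x =
          (\<Sum>j\<in>{1..k}. if j = k then complex_of_real (sin (pi * real k * x)) else 0)"
      unfolding sfun_def by (intro sum.cong) (auto simp flip: of_real_mult)
    also have "\<dots> = complex_of_real (sin (pi * real k * x))" using False by (subst sum.delta) auto
    finally show ?thesis by simp
  qed
  then show ?thesis unfolding SP_def by blast
qed

lemma SP_cos: assumes "SP f" shows "SP (\<lambda>x. f x * complex_of_real (cos (pi * x)))"
proof -
  obtain K b where 1: "\<forall>x. f x = sfun b {1..K} x" using assms(1) unfolding SP_def by auto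
  have eq: "f x * complex_of_real (cos (pi * x)) =
     (\<Sum>k\<in>{1..K}. (b k * complex_of_real (sqrt 2 / 2)) *
        (complex_of_real (sin (pi * real (k + 1) * x)) + complex_of_real (sin (pi * real (k - 1) * x))))" for x
  proof -
    have t: "complex_of_real (sqrt 2 * sin (pi * real k * x)) * complex_of_real (cos (pi * x)) =
        complex_of_real (sqrt 2 / 2) * (complex_of_real (sin (pi * real (k + 1) * x)) + complex_of_real (sin (pi * real (k - 1) * x)))"
      if "k \<in> {1..K}" for k
    proof -
      have r: "real (k - 1) = real k - 1" using that by auto
      have "sin (pi * real (k + 1) * x) + sin (pi * real (k - 1) * x) = 2 * sin (pi * real k * x) * cos (pi * x)"
        unfolding r by (simp add: algebra_simps sin_add sin_diff)
      then have R: "sqrt 2 * sin (pi * real k * x) * cos (pi * x) =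
          sqrt 2 / 2 * (sin (pi * real (k + 1) * x) + sin (pi * real (k - 1) * x))" by simp
      have "complex_of_real (sqrt 2 * sin (pi * real k * x)) * complex_of_real (cos (pi * x)) =
            complex_of_real (sqrt 2 * sin (pi * real k * x) * cos (pi * x))" by simp
      also have "\<dots> = complex_of_real (sqrt 2 / 2 * (sin (pi * real (k + 1) * x) + sin (pi * real (k - 1) * x)))"
        by (rule arg_cong[OF R])
      also have "\<dots> = complex_of_real (sqrt 2 / 2) * (complex_of_real (sin (pi * real (k + 1) * x)) + complex_of_real (sin (pi * real (k - 1) * x)))"
        by (simp only: of_real_mult of_real_add)
      finally show ?thesis .
    qed
    have "f x * complex_of_real (cos (pi * x)) =
      (\<Sum>k\<in>{1..K}. b k * complex_of_real (sqrt 2 * sin (pi * real k * x)) * complex_of_real (cos (pi * x)))"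
      using 1 unfolding sfun_def by (simp add: sum_distrib_right)
    also have "\<dots> = (\<Sum>k\<in>{1..K}. (b k * complex_of_real (sqrt 2 / 2)) *
        (complex_of_real (sin (pi * real (k + 1) * x)) + complex_of_real (sin (pi * real (k - 1) * x))))"
    proof (intro sum.cong refl)
      fix k assume k: "k \<in> {1..K}"
      have "b k * complex_of_real (sqrt 2 * sin (pi * real k * x)) * complex_of_real (cos (pi * x)) =
        b k * (complex_of_real (sqrt 2 * sin (pi * real k * x)) * complex_of_real (cos (pi * x)))"
        by (simp only: mult.assoc)
      also have "\<dots> = b k * (complex_of_real (sqrt 2 / 2) * (complex_of_real (sin (pi * real (k + 1) * x)) + complex_of_real (sin (pi * real (k - 1) * x))))"
        by (simp only: t[OF k])
      finally show "b k * complex_of_real (sqrt 2 * sin (pi * real k * x)) * complex_of_real (cos (pi * x)) =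
         (b k * complex_of_real (sqrt 2 / 2)) * (complex_of_real (sin (pi * real (k + 1) * x)) + complex_of_real (sin (pi * real (k - 1) * x)))"
        by (simp only: mult.assoc)
    qed
    finally show ?thesis .
  qed
  have "SP (\<lambda>x. \<Sum>k\<in>{1..K}. (b k * complex_of_real (sqrt 2 / 2)) *
        (complex_of_real (sin (pi * real (k + 1) * x)) + complex_of_real (sin (pi * real (k - 1) * x))))"
    by (intro SP_sum SP_scal SP_add SP_sin) auto
  then show ?thesis unfolding eq .
qed

lemma SP_sincos: "SP (\<lambda>x. complex_of_real (sin (pi * x)) * complex_of_real (cos (pi * x)) ^ i)"
proof (induction i)
  case 0
  then show ?case using SP_sin[of 1] by simp
next
  case (Suc i)
  from SP_cos[OF Suc] show ?case by (simp add: mult_ac)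
qed

lemma SP_poly:
  fixes p :: "real \<Rightarrow> complex"
  assumes "polynomial_function p"
  shows "SP (\<lambda>x. complex_of_real (sin (pi * x)) * p (cos (pi * x)))"
proof -
  have rp: "real_polynomial_function (\<lambda>x. inner (p x) b)" if "b \<in> Basis" for b
    using assms that polynomial_function_iff_Basis_inner by blast
  have B: "1 \<in> (Basis::complex set)" "\<i> \<in> (Basis::complex set)" by (simp_all add: Basis_complex_def)
  have e1: "(\<lambda>x. inner (p x) 1) = (\<lambda>x. Re (p x))" and e2: "(\<lambda>x. inner (p x) \<i>) = (\<lambda>x. Im (p x))"
    by (simp_all add: inner_complex_def)
  have "real_polynomial_function (\<lambda>x. Re (p x))" "real_polynomial_function (\<lambda>x. Im (p x))"
    using rp[OF B(1)] rp[OF B(2)] unfolding e1 e2 by auto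
  then obtain a n a' n' where a: "(\<lambda>x. Re (p x)) = (\<lambda>x. \<Sum>i\<le>n. a i * x ^ i)"
      and a': "(\<lambda>x. Im (p x)) = (\<lambda>x. \<Sum>i\<le>n'. a' i * x ^ i)"
    unfolding real_polynomial_function_iff_sum by metis
  have pe: "p t = (\<Sum>i\<le>n. complex_of_real (a i) * complex_of_real t ^ i) +
                 \<i> * (\<Sum>i\<le>n'. complex_of_real (a' i) * complex_of_real t ^ i)" for t
  proof -
    have "p t = complex_of_real (Re (p t)) + \<i> * complex_of_real (Im (p t))" by (simp add: complex_eq)
    also have "Re (p t) = (\<Sum>i\<le>n. a i * t ^ i)" using fun_cong[OF a, of t] by simp
    also have "Im (p t) = (\<Sum>i\<le>n'. a' i * t ^ i)" using fun_cong[OF a', of t] by simp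
    finally show ?thesis by simp
  qed
  have eq: "complex_of_real (sin (pi * x)) * p (cos (pi * x)) =
     (\<Sum>i\<le>n. complex_of_real (a i) * (complex_of_real (sin (pi * x)) * complex_of_real (cos (pi * x)) ^ i)) +
     \<i> * (\<Sum>i\<le>n'. complex_of_real (a' i) * (complex_of_real (sin (pi * x)) * complex_of_real (cos (pi * x)) ^ i))" for x
    unfolding pe by (simp add: distrib_left sum_distrib_left mult_ac)
  show ?thesis unfolding eq
    by (intro SP_add SP_scal SP_sum SP_sincos) auto
qed


lemma unif_sine_approx:
  fixes \<phi> :: "real \<Rightarrow> complex"
  assumes cont: "continuous_on UNIV \<phi>" and d: "0 < \<delta>" "\<delta> \<le> 1/2"
    and supp: "\<And>x. x \<le> \<delta> \<or> 1 - \<delta> \<le> x \<Longrightarrow> \<phi> x = 0" and eta: "0 < \<eta>"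
  shows "\<exists>K \<beta>. \<forall>x\<in>{0..1}. cmod (\<phi> x - sfun \<beta> {1..K} x) \<le> \<eta>"
proof -
  have "\<exists>x0\<in>{\<delta>..1-\<delta>}. \<forall>y\<in>{\<delta>..1-\<delta>}. sin (pi * x0) \<le> sin (pi * y)"
    by (rule continuous_attains_inf) (use d in \<open>auto intro!: continuous_intros\<close>)
  then obtain x0 where x0: "x0 \<in> {\<delta>..1-\<delta>}" and mn: "\<And>y. y \<in> {\<delta>..1-\<delta>} \<Longrightarrow> sin (pi * x0) \<le> sin (pi * y)"
    by blast
  define s1 where "s1 = sin (pi * x0)"
  have s1: "0 < s1" unfolding s1_def using x0 d by (intro sin_gt_zero) auto
  define \<Psi> where "\<Psi> t = \<phi> (arccos t / pi) / complex_of_real (sqrt (max (1 - t\<^sup>2) (s1\<^sup>2)))" for t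
  have pos: "0 < sqrt (max (1 - t\<^sup>2) (s1\<^sup>2))" for t
  proof -
    have "0 < s1\<^sup>2" using s1 by simp
    then have "0 < max (1 - t\<^sup>2) (s1\<^sup>2)" by (simp add: less_max_iff_disj)
    then show ?thesis by simp
  qed
  have c1: "continuous_on {-1..1} (\<lambda>t. \<phi> (arccos t / pi))"
    by (rule continuous_on_compose2[OF cont]) (auto intro!: continuous_intros)
  have c2: "continuous_on {-1..1} (\<lambda>t. complex_of_real (sqrt (max (1 - t\<^sup>2) (s1\<^sup>2))))"
    by (intro continuous_intros)
  have nz: "\<forall>t\<in>{-1..1}. complex_of_real (sqrt (max (1 - t\<^sup>2) (s1\<^sup>2))) \<noteq> 0"
    using pos by (metis of_real_eq_0_iff order_less_irrefl)
  have cPsi: "continuous_on {-1..1} \<Psi>"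
    unfolding \<Psi>_def by (rule continuous_on_divide[OF c1 c2 nz])
  obtain p where p: "polynomial_function p" and pa: "\<And>t. t \<in> {-1..1} \<Longrightarrow> norm (\<Psi> t - p t) < \<eta>"
    using Stone_Weierstrass_polynomial_function[OF compact_Icc cPsi eta] by blast
  obtain K \<beta> where Kb: "\<forall>x. complex_of_real (sin (pi * x)) * p (cos (pi * x)) = sfun \<beta> {1..K} x"
    using SP_poly[OF p] unfolding SP_def by blast
  have claim: "\<phi> x = complex_of_real (sin (pi * x)) * \<Psi> (cos (pi * x))" if x: "x \<in> {0..1}" for x
  proof -
    have ac: "arccos (cos (pi * x)) / pi = x" using x by (subst arccos_cos) auto
    have sc: "1 - (cos (pi * x))\<^sup>2 = (sin (pi * x))\<^sup>2" by (simp add: sin_squared_eq)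
    show ?thesis
    proof (cases "\<phi> x = 0")
      case True then show ?thesis unfolding \<Psi>_def ac by simp
    next
      case False
      then have "\<not> (x \<le> \<delta> \<or> 1 - \<delta> \<le> x)" using supp by blast
      then have xin: "x \<in> {\<delta>..1-\<delta>}" by auto
      have sge: "s1 \<le> sin (pi * x)" unfolding s1_def using mn[OF xin] .
      then have "s1\<^sup>2 \<le> (sin (pi * x))\<^sup>2" using s1 by (intro power_mono) auto
      then have "sqrt (max (1 - (cos (pi * x))\<^sup>2) (s1\<^sup>2)) = sin (pi * x)"
        unfolding sc using sge s1 by (simp add: max_def)
      moreover have "sin (pi * x) \<noteq> 0" using sge s1 by simp
      ultimately show ?thesis unfolding \<Psi>_def ac by simp
    qed
  qed
  have "cmod (\<phi> x - sfun \<beta> {1..K} x) \<le> \<eta>" if x: "x \<in> {0..1}" for x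
  proof -
    have "\<phi> x - sfun \<beta> {1..K} x = complex_of_real (sin (pi * x)) * (\<Psi> (cos (pi * x)) - p (cos (pi * x)))"
      using claim[OF x] spec[OF Kb, of x] by (simp add: right_diff_distrib)
    then have "cmod (\<phi> x - sfun \<beta> {1..K} x) = \<bar>sin (pi * x)\<bar> * cmod (\<Psi> (cos (pi * x)) - p (cos (pi * x)))"
      by (simp add: norm_mult)
    also have "\<dots> \<le> 1 * \<eta>"
      by (intro mult_mono abs_sin_le_one less_imp_le[OF pa]) auto
    finally show ?thesis by simp
  qed
  then show ?thesis by blast
qed

lemma N2_unif_bound:
  fixes f :: "real \<Rightarrow> complex"
  assumes "\<And>x. x \<in> {0..1} \<Longrightarrow> cmod (f x) \<le> \<eta>"
  shows "N2 f \<le> ennreal (\<eta>\<^sup>2)"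
proof -
  have pw: "ennreal ((cmod (f x))\<^sup>2) * indicator {0<..<1} x \<le> ennreal (\<eta>\<^sup>2) * indicator {0<..<1} x" for x
  proof (cases "x \<in> {0<..<1}")
    case True
    then have "(cmod (f x))\<^sup>2 \<le> \<eta>\<^sup>2" using assms[of x] by (intro power_mono) auto
    then show ?thesis using True by (simp add: ennreal_leI)
  qed simp
  have "N2 f \<le> (\<integral>\<^sup>+ (x::real). ennreal (\<eta>\<^sup>2) * indicator {0<..<1} x \<partial>lborel)"
    unfolding N2_def by (rule nn_integral_mono) (rule pw)
  also have "\<dots> = ennreal (\<eta>\<^sup>2)" by (simp add: nn_integral_cmult_indicator)
  finally show ?thesis .
qed


definition trunc :: "real \<Rightarrow> complex \<Rightarrow> complex" where
  "trunc M z = z * complex_of_real (M / max M (cmod z))"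

lemma trunc_bound: assumes "0 < M" shows "cmod (trunc M z) \<le> M"
proof (cases "cmod z \<le> M")
  case True
  then show ?thesis using assms by (simp add: trunc_def norm_mult max_def)
next
  case False
  have cz: "0 < cmod z" using False assms by linarith
  have mx: "max M (cmod z) = cmod z" using False by simp
  have "cmod (trunc M z) = cmod z * \<bar>M / cmod z\<bar>"
    unfolding trunc_def mx by (simp only: norm_mult norm_of_real)
  also have "\<bar>M / cmod z\<bar> = M / cmod z" using assms cz by (intro abs_of_nonneg divide_nonneg_nonneg) auto
  also have "cmod z * (M / cmod z) = M" using cz by simp
  finally show ?thesis by simp
qed

lemma trunc_id: assumes "cmod z \<le> M" shows "trunc M z = z"
proof (cases "M = 0")
  case True
  then have "z = 0" using assms by simp
  then show ?thesis by (simp add: trunc_def)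
next
  case False
  then have "0 < M" using assms norm_ge_zero[of z] by linarith
  then show ?thesis using assms by (simp add: trunc_def max_def)
qed

lemma trunc_diff: assumes "0 < M" shows "cmod (z - trunc M z) \<le> cmod z"
proof -
  have f: "0 \<le> M / max M (cmod z)" "M / max M (cmod z) \<le> 1" using assms by (auto simp: max_def divide_le_eq)
  have "z - trunc M z = z * complex_of_real (1 - M / max M (cmod z))"
    by (simp add: trunc_def algebra_simps)
  then have "cmod (z - trunc M z) = cmod z * \<bar>1 - M / max M (cmod z)\<bar>" by (simp only: norm_mult norm_of_real)
  also have "\<dots> \<le> cmod z * 1" using f by (intro mult_left_mono) auto
  finally show ?thesis by simp
qed

lemma trunc_cont: assumes "0 < M" shows "continuous_on UNIV (trunc M)"
proof -
  have "\<forall>z\<in>UNIV. max M (cmod z) \<noteq> 0" using assms by (auto simp: max_def)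
  then show ?thesis unfolding trunc_def by (intro continuous_intros) auto
qed

lemma trunc_measurable[measurable]:
  assumes [measurable]: "f \<in> borel_measurable M" shows "(\<lambda>x. trunc c (f x)) \<in> borel_measurable M"
  unfolding trunc_def by measurable

lemma ennreal_eventually_less:
  fixes f :: "nat \<Rightarrow> ennreal"
  assumes "f \<longlonglongrightarrow> 0" "0 < \<epsilon>"
  shows "\<forall>\<^sub>F n in sequentially. f n < ennreal \<epsilon>"
  using order_tendstoD(2)[OF assms(1)] assms(2) by simp

lemma truncation:
  assumes h: "h \<in> L2_01" and eps: "0 < \<epsilon>"
  shows "\<exists>M>0. N2 (\<lambda>x. h x - trunc M (h x)) < ennreal \<epsilon>"
proof -
  have hm[measurable]: "h \<in> borel_measurable M01" and hf: "N2 h < \<infinity>" using h by (auto simp: L2_01_iff)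
  define u where "u m x = ennreal ((cmod (h x - trunc (real m + 1) (h x)))\<^sup>2)" for m x
  have lim: "(\<lambda>m. \<integral>\<^sup>+x. u m x \<partial>M01) \<longlonglongrightarrow> (\<integral>\<^sup>+x. 0 \<partial>M01)"
  proof (rule nn_integral_dominated_convergence[where w="\<lambda>x. ennreal ((cmod (h x))\<^sup>2)"])
    show "\<And>i. u i \<in> borel_measurable M01" unfolding u_def by measurable
    show "(\<lambda>x. 0) \<in> borel_measurable M01" by simp
    show "(\<lambda>x. ennreal ((cmod (h x))\<^sup>2)) \<in> borel_measurable M01" by measurable
    show "AE x in M01. u j x \<le> ennreal ((cmod (h x))\<^sup>2)" for j
      unfolding u_def by (intro AE_I2 ennreal_leI power_mono trunc_diff) auto
    show "(\<integral>\<^sup>+x. ennreal ((cmod (h x))\<^sup>2) \<partial>M01) < \<infinity>" using hf unfolding N2_M01 .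
    show "AE x in M01. (\<lambda>i. u i x) \<longlonglongrightarrow> 0"
    proof (intro AE_I2)
      fix x
      have "\<forall>\<^sub>F m in sequentially. u m x = 0"
      proof (rule eventually_sequentiallyI[of "nat \<lceil>cmod (h x)\<rceil>"])
        fix m assume "nat \<lceil>cmod (h x)\<rceil> \<le> m"
        then have "cmod (h x) \<le> real m + 1" by linarith
        then show "u m x = 0" unfolding u_def by (simp add: trunc_id)
      qed
      then show "(\<lambda>i. u i x) \<longlonglongrightarrow> 0" by (rule tendsto_eventually)
    qed
  qed
  then have "(\<lambda>m. N2 (\<lambda>x. h x - trunc (real m + 1) (h x))) \<longlonglongrightarrow> 0"
    unfolding N2_M01 u_def by simp
  from ennreal_eventually_less[OF this eps] obtain m where "N2 (\<lambda>x. h x - trunc (real m + 1) (h x)) < ennreal \<epsilon>"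
    by (auto dest: eventually_happens)
  then show ?thesis by (intro exI[of _ "real m + 1"]) auto
qed

definition cut :: "nat \<Rightarrow> real \<Rightarrow> real" where
  "cut n x = max 0 (min 1 (real n * min x (1 - x) - 1))"

lemma cut_cont: "continuous_on UNIV (cut n)"
  unfolding cut_def by (intro continuous_intros)

lemma cut_bounds: "0 \<le> cut n x" "cut n x \<le> 1" unfolding cut_def by auto

lemma cut_zero:
  assumes "1 \<le> n" "x \<le> 1 / real n \<or> 1 - 1 / real n \<le> x"
  shows "cut n x = 0"
proof -
  have "min x (1 - x) \<le> 1 / real n" using assms by auto
  then have "real n * min x (1 - x) \<le> real n * (1 / real n)" using assms by (intro mult_left_mono) auto
  then have "real n * min x (1 - x) \<le> 1" using assms by simp
  then show ?thesis unfolding cut_def by simp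
qed

lemma cut_lim:
  assumes "0 < x" "x < 1"
  shows "(\<lambda>n. cut n x) \<longlonglongrightarrow> 1"
proof -
  have m: "0 < min x (1 - x)" using assms by simp
  have "\<forall>\<^sub>F n in sequentially. cut n x = 1"
  proof (rule eventually_sequentiallyI[of "nat \<lceil>2 / min x (1 - x)\<rceil>"])
    fix n assume "nat \<lceil>2 / min x (1 - x)\<rceil> \<le> n"
    then have "2 / min x (1 - x) \<le> real n" by linarith
    then have "2 \<le> real n * min x (1 - x)" using m by (simp add: field_simps)
    then show "cut n x = 1" unfolding cut_def by simp
  qed
  then show ?thesis by (rule tendsto_eventually)
qed

lemma emeasure_M01: "(\<integral>\<^sup>+x. c \<partial>M01) = c"
proof -
  have "(\<integral>\<^sup>+x. c \<partial>M01) = (\<integral>\<^sup>+(x::real). c * indicator {0<..<1} x \<partial>lborel)"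
    by (subst nn_integral_restrict_space) auto
  also have "\<dots> = c" by (simp add: nn_integral_cmult_indicator)
  finally show ?thesis .
qed

lemma cont_approx:
  assumes um: "u \<in> borel_measurable M01" and ub: "\<And>x. cmod (u x) \<le> M" and M: "0 < M" and eps: "0 < \<epsilon>"
  shows "\<exists>\<phi> \<delta>. continuous_on UNIV \<phi> \<and> 0 < \<delta> \<and> \<delta> \<le> 1/2 \<and> (\<forall>x. x \<le> \<delta> \<or> 1 - \<delta> \<le> x \<longrightarrow> \<phi> x = 0) \<and>
          N2 (\<lambda>x. u x - \<phi> x) < ennreal \<epsilon>"
proof -
  define ut where "ut x = indicator {0<..<1} x *\<^sub>R u x" for x :: real
  have utb: "ut \<in> borel_measurable borel"
    using um unfolding ut_def by (subst (asm) borel_measurable_restrict_space_iff) auto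
  then have "ut \<in> borel_measurable (lebesgue_on UNIV)"
    unfolding lebesgue_on_UNIV_eq by (intro measurable_completion) simp
  then have "ut measurable_on UNIV" by (subst measurable_on_iff_borel_measurable) auto
  then obtain Nn g where Nn: "negligible Nn" and gc: "\<And>n. continuous_on UNIV (g n)"
      and gl: "\<And>x. x \<notin> Nn \<Longrightarrow> (\<lambda>n. g n x) \<longlonglongrightarrow> ut x"
    unfolding measurable_on_def by auto
  have "Nn \<in> null_sets lebesgue" using Nn by (simp add: negligible_iff_null_sets)
  then have "AE x in lebesgue. x \<notin> Nn" by (rule AE_not_in)
  then have aeN: "AE x in lborel. x \<notin> Nn" by (simp add: AE_completion_iff)
  define v where "v n x = trunc M (g n x) * complex_of_real (cut n x)" for n x
  have vc: "continuous_on UNIV (v n)" for n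
    unfolding v_def using gc trunc_cont[OF M] cut_cont
    by (intro continuous_intros continuous_on_compose2[OF trunc_cont[OF M], of UNIV "g n"]) auto
  have vb: "cmod (v n x) \<le> M" for n x
  proof -
    have "cmod (v n x) = cmod (trunc M (g n x)) * \<bar>cut n x\<bar>" unfolding v_def by (simp add: norm_mult)
    also have "\<dots> \<le> M * 1" using cut_bounds trunc_bound[OF M] less_imp_le[OF M] by (intro mult_mono) auto
    finally show ?thesis by simp
  qed
  have vm: "v n \<in> borel_measurable M01" for n
  proof -
    have "v n \<in> borel_measurable borel" by (rule borel_measurable_continuous_onI[OF vc])
    then show ?thesis by (intro measurable_restrict_space1) simp
  qed
  define w where "w n x = ennreal ((cmod (u x - v n x))\<^sup>2)" for n x
  have lim: "(\<lambda>n. \<integral>\<^sup>+x. w n x \<partial>M01) \<longlonglongrightarrow> (\<integral>\<^sup>+x. 0 \<partial>M01)"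
  proof (rule nn_integral_dominated_convergence[where w="\<lambda>x. ennreal ((2 * M)\<^sup>2)"])
    show "\<And>i. w i \<in> borel_measurable M01" unfolding w_def using um vm by measurable
    show "(\<lambda>x. 0) \<in> borel_measurable M01" by simp
    show "(\<lambda>x. ennreal ((2 * M)\<^sup>2)) \<in> borel_measurable M01" by simp
    show "AE x in M01. w j x \<le> ennreal ((2 * M)\<^sup>2)" for j
    proof (intro AE_I2)
      fix x
      have "cmod (u x - v j x) \<le> cmod (u x) + cmod (v j x)" by (rule norm_triangle_ineq4)
      also have "\<dots> \<le> 2 * M" using ub[of x] vb[of j x] by simp
      finally show "w j x \<le> ennreal ((2 * M)\<^sup>2)" unfolding w_def by (intro ennreal_leI power_mono) auto
    qed
    show "(\<integral>\<^sup>+x. ennreal ((2 * M)\<^sup>2) \<partial>M01) < \<infinity>" unfolding emeasure_M01 by simp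
    show "AE x in M01. (\<lambda>i. w i x) \<longlonglongrightarrow> 0"
    proof -
      have "AE x in lborel. x \<in> {0<..<1} \<longrightarrow> (\<lambda>i. w i x) \<longlonglongrightarrow> 0"
        using aeN
      proof (rule AE_mp, intro AE_I2 impI)
        fix x assume x: "x \<notin> Nn" and x01: "x \<in> {0<..<1}"
        have "(\<lambda>n. g n x) \<longlonglongrightarrow> u x" using gl[OF x] x01 by (simp add: ut_def)
        then have "(\<lambda>n. trunc M (g n x)) \<longlonglongrightarrow> trunc M (u x)"
          by (intro continuous_on_tendsto_compose[OF trunc_cont[OF M]]) auto
        then have "(\<lambda>n. trunc M (g n x)) \<longlonglongrightarrow> u x" using trunc_id[OF ub] by simp
        moreover have "(\<lambda>n. complex_of_real (cut n x)) \<longlonglongrightarrow> complex_of_real 1"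
          using cut_lim[of x] x01 by (intro tendsto_of_real) auto
        ultimately have "(\<lambda>n. v n x) \<longlonglongrightarrow> u x * 1" unfolding v_def by (intro tendsto_mult) auto
        then have "(\<lambda>n. u x - v n x) \<longlonglongrightarrow> 0" using tendsto_diff[OF tendsto_const[of "u x"]] by fastforce
        then have "(\<lambda>n. (cmod (u x - v n x))\<^sup>2) \<longlonglongrightarrow> (cmod 0)\<^sup>2" by (intro tendsto_intros)
        then have "(\<lambda>n. ennreal ((cmod (u x - v n x))\<^sup>2)) \<longlonglongrightarrow> ennreal 0" by (intro tendsto_ennrealI) simp
        then show "(\<lambda>i. w i x) \<longlonglongrightarrow> 0" unfolding w_def by simp
      qed
      then show ?thesis by (subst AE_restrict_space_iff) auto
    qed
  qed
  then have "(\<lambda>n. N2 (\<lambda>x. u x - v n x)) \<longlonglongrightarrow> 0" unfolding N2_M01 w_def by simp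
  from ennreal_eventually_less[OF this eps]
  have "\<forall>\<^sub>F n in sequentially. N2 (\<lambda>x. u x - v n x) < ennreal \<epsilon> \<and> 2 \<le> n"
    by (intro eventually_conj) (auto simp: eventually_ge_at_top)
  then obtain n where n: "N2 (\<lambda>x. u x - v n x) < ennreal \<epsilon>" "2 \<le> n" by (auto dest: eventually_happens)
  have supp: "\<forall>x. x \<le> 1 / real n \<or> 1 - 1 / real n \<le> x \<longrightarrow> v n x = 0"
    using cut_zero[of n] n(2) by (auto simp: v_def)
  have "1 / real n \<le> 1/2" using n(2) by (simp add: field_simps)
  then show ?thesis using vc[of n] n supp
    by (intro exI[of _ "v n"] exI[of _ "1 / real n"]) auto
qed


lemma ennreal_sum_bound:
  fixes a b c :: ennreal
  assumes "a \<le> ennreal e" "b \<le> ennreal e" "c \<le> ennreal e" "0 \<le> e"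
  shows "2 * a + 2 * (2 * b + 2 * c) \<le> ennreal (10 * e)"
proof -
  have "2 * a + 2 * (2 * b + 2 * c) \<le> 2 * ennreal e + 2 * (2 * ennreal e + 2 * ennreal e)"
    using assms by (intro add_mono mult_left_mono) auto
  also have "\<dots> = (2 + 2 * (2 + 2)) * ennreal e"
    by (simp only: distrib_right distrib_left mult.assoc)
  also have "(2 + 2 * (2 + 2) :: ennreal) = 10" by simp
  also have "10 * ennreal e = ennreal (10 * e)" using assms(4) by (simp add: ennreal_mult)
  finally show ?thesis .
qed

lemma density:
  assumes h: "h \<in> L2_01" and eps: "0 < \<epsilon>"
  shows "\<exists>K \<beta>. L2_dist2 h (sfun \<beta> {1..K}) < ennreal \<epsilon>"
proof -
  define e where "e = \<epsilon> / 16"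
  have e: "0 < e" using eps unfolding e_def by simp
  have hm: "h \<in> borel_measurable M01" using h by (simp add: L2_01_iff)
  obtain M where M: "0 < M" and hM: "N2 (\<lambda>x. h x - trunc M (h x)) < ennreal e"
    using truncation[OF h e] by blast
  define u where "u x = trunc M (h x)" for x
  have um: "u \<in> borel_measurable M01" unfolding u_def using hm by measurable
  have ub: "cmod (u x) \<le> M" for x unfolding u_def by (rule trunc_bound[OF M])
  obtain \<phi> \<delta> where phic: "continuous_on UNIV \<phi>" and d: "0 < \<delta>" "\<delta> \<le> 1/2"
      and supp: "\<forall>x. x \<le> \<delta> \<or> 1 - \<delta> \<le> x \<longrightarrow> \<phi> x = 0" and uphi: "N2 (\<lambda>x. u x - \<phi> x) < ennreal e"
    using cont_approx[OF um ub M e] by blast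
  obtain K \<beta> where Kb: "\<forall>x\<in>{0..1}. cmod (\<phi> x - sfun \<beta> {1..K} x) \<le> sqrt e"
    using unif_sine_approx[OF phic d _ , of "sqrt e"] supp e by auto
  have phis: "N2 (\<lambda>x. \<phi> x - sfun \<beta> {1..K} x) \<le> ennreal e"
    using N2_unif_bound[of "\<lambda>x. \<phi> x - sfun \<beta> {1..K} x" "sqrt e"] Kb e by simp
  have phim: "\<phi> \<in> borel_measurable M01"
  proof -
    have "\<phi> \<in> borel_measurable borel" by (rule borel_measurable_continuous_onI[OF phic])
    then show ?thesis by (intro measurable_restrict_space1) simp
  qed
  have A: "L2_dist2 h (sfun \<beta> {1..K}) \<le> 2 * L2_dist2 h u + 2 * L2_dist2 u (sfun \<beta> {1..K})"
    by (rule dist_tri[OF hm um sfun_measurable])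
  have B: "L2_dist2 u (sfun \<beta> {1..K}) \<le> 2 * L2_dist2 u \<phi> + 2 * L2_dist2 \<phi> (sfun \<beta> {1..K})"
    by (rule dist_tri[OF um phim sfun_measurable])
  have "L2_dist2 h (sfun \<beta> {1..K}) \<le> 2 * L2_dist2 h u + 2 * (2 * L2_dist2 u \<phi> + 2 * L2_dist2 \<phi> (sfun \<beta> {1..K}))"
    by (rule order.trans[OF A]) (intro add_left_mono mult_left_mono B, simp)
  also have "2 * L2_dist2 h u + 2 * (2 * L2_dist2 u \<phi> + 2 * L2_dist2 \<phi> (sfun \<beta> {1..K})) \<le> ennreal (10 * e)"
    by (rule ennreal_sum_bound) (use hM uphi phis e in \<open>auto simp: L2_dist2_N2 u_def\<close>)
  also have "\<dots> < ennreal \<epsilon>" using eps unfolding e_def by (simp add: ennreal_less_iff)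
  finally show ?thesis by blast
qed


lemma two_ennreal: "0 \<le> a \<Longrightarrow> 2 * ennreal a = ennreal (2 * a)"
  by (simp add: ennreal_mult)

lemma PDCP_f1:
  assumes f1: "L2_sine_sum acoef f1"
  shows "PDCP f1"
  unfolding PDCP_def
proof (intro conjI ballI allI impI)
  show "f1 \<in> L2_01" using L2_sine_sumD[OF f1] by simp
next
  fix h :: "real \<Rightarrow> complex" and \<epsilon> :: real
  assume h: "h \<in> L2_01" and eps: "0 < \<epsilon>"
  obtain K \<beta> where hS: "L2_dist2 h (sfun \<beta> {1..K}) < ennreal (\<epsilon> / 4)"
    using density[OF h, of "\<epsilon> / 4"] eps by auto
  obtain N c where supp: "\<forall>n. n \<notin> {1..N} \<longrightarrow> c n = 0"
    and cb: "\<forall>n. (\<Sum>t\<in>{1..n}. (cmod (Bc c t - (if t \<in> {1..K} then \<beta> t else 0)))\<^sup>2) \<le> \<epsilon> / 16"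
    using approx_coeffs[of "\<epsilon> / 16" K \<beta>] eps by auto
  define bh where "bh t = (if t \<in> {1..K} then \<beta> t else 0)" for t
  define G where "G = Gfun f1 N c"
  have GS': "L2_sine_sum (Bc c) G" unfolding G_def by (rule GS[OF f1]) (use supp in auto)
  have sfeq: "sfun bh {1..K} = sfun \<beta> {1..K}" unfolding sfun_def bh_def by (rule ext, rule sum.cong) auto
  have "L2_sine_sum bh (sfun bh {1..K})"
    by (rule L2_sine_sum_finite) (auto simp: bh_def)
  then have SS: "L2_sine_sum bh (sfun \<beta> {1..K})" unfolding sfeq .
  have D: "L2_sine_sum (\<lambda>t. Bc c t + (-1) * bh t) (\<lambda>x. G x + (-1) * sfun \<beta> {1..K} x)"
    by (rule L2_sine_sum_lin[OF GS' SS])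
  have "N2 (\<lambda>x. G x + (-1) * sfun \<beta> {1..K} x) \<le> 2 * ennreal (\<epsilon> / 16)"
    by (rule L2_sine_sum_bound[OF D]) (use cb in \<open>simp add: bh_def\<close>)
  then have dSG: "L2_dist2 (sfun \<beta> {1..K}) G \<le> ennreal (\<epsilon> / 8)"
    unfolding L2_dist2_N2 using N2_minus[of "\<lambda>x. sfun \<beta> {1..K} x - G x"] two_ennreal[of "\<epsilon> / 16"] eps
    by simp
  have Gm: "G \<in> borel_measurable M01" "G \<in> L2_01" using L2_sine_sumD[OF GS'] by auto
  have hm: "h \<in> borel_measurable M01" using h by (simp add: L2_01_iff)
  have "L2_dist2 h G \<le> 2 * L2_dist2 h (sfun \<beta> {1..K}) + 2 * L2_dist2 (sfun \<beta> {1..K}) G"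
    by (rule dist_tri[OF hm sfun_measurable Gm(1)])
  also have "\<dots> \<le> 2 * ennreal (\<epsilon> / 4) + 2 * ennreal (\<epsilon> / 8)"
    using hS dSG by (intro add_mono mult_left_mono) auto
  also have "\<dots> = ennreal (3 * \<epsilon> / 4)"
  proof -
    have "2 * ennreal (\<epsilon> / 4) + 2 * ennreal (\<epsilon> / 8) = ennreal (2 * (\<epsilon> / 4)) + ennreal (2 * (\<epsilon> / 8))"
      using eps two_ennreal[of "\<epsilon>/4"] two_ennreal[of "\<epsilon>/8"] by simp
    also have "\<dots> = ennreal (2 * (\<epsilon> / 4) + 2 * (\<epsilon> / 8))" using eps by (intro ennreal_plus[symmetric]) auto
    also have "2 * (\<epsilon> / 4) + 2 * (\<epsilon> / 8) = 3 * \<epsilon> / 4" by simp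
    finally show ?thesis .
  qed
  also have "\<dots> < ennreal \<epsilon>" using eps by (simp add: ennreal_less_iff)
  finally have "L2_dist2 h G < ennreal \<epsilon>" .
  then show "\<exists>N c. (\<lambda>x. \<Sum>n\<in>{1..N}. c n * odd_ext f1 (real n * x)) \<in> L2_01 \<and>
        L2_dist2 h (\<lambda>x. \<Sum>n\<in>{1..N}. c n * odd_ext f1 (real n * x)) < ennreal \<epsilon>"
    using Gm(2) unfolding G_def Gfun_def by blast
qed

theorem mainTheorem14:
  shows "(\<exists>F. L2_sine_sum (\<lambda>k. 1 / of_nat k) F) \<and>
         (\<forall>f1. L2_sine_sum (\<lambda>k. 1 / of_nat k) f1 \<longrightarrow> PDCP f1 \<and> \<not> in_range_V f1)"
proof -
  have ea: "(\<lambda>k. 1 / of_nat k) = acoef" by (rule ext) (simp add: acoef_def)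
  show ?thesis unfolding ea using F0_sine_sum PDCP_f1 not_in_range_V by blast
qed


end
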